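(* (General Lift.) Fix a dimension $d$ and a geometric construction in $d$-dimensional space producing elements $q_1,\ldots,q_s$ from input elements $p_1,\ldots,p_N$, where each step is either the (stable) join of $d$ previously obtained points into a hyperplane or the (stable) intersection of $d$ previously obtained hyperplanes into a point, computed by Cramer's rule. Suppose this construction can be meaningfully performed in projective space over $\mathbb{K}$ by Cramer's rule, and suppose the construction of each $q_i$ is tropically admissible. Then for any specialization of the tropical input data, given by homogeneous coordinates $p_i=[p_i^1:\ldots:p_i^{m_i}]$ ($m_i=d+1$), $1\le i\le N$, there exists a nonempty set $U\subseteq(\mathbb{C}^* )^{m_1-1}\times\cdots\times(\mathbb{C}^* )^{m_N-1}$ (each factor viewed inside $\mathbb{P}^{m_i-1}(\mathbb{C})$ via homogeneous coordinates) such that: 1. for every $(x_1,\ldots,x_N)\in U$ there exist $P_1,\ldots,P_N$ with Puiseux series coordinates such that $T(P_i)=p_i$, $Pc(P_i)=x_i$, and the projective construction of $Q_1,\ldots,Q_s$ from $P_1,\ldots,P_N$ is meaningful; 2. for all $(P_1,\ldots,P_N)\in\mathbb{P}^{m_1-1}(\mathbb{K})\times\cdots\times\mathbb{P}^{m_N-1}(\mathbb{K})$ with $T(P_i)=p_i$ and $(Pc(P_1),\ldots,Pc(P_N))\in U$, the tropicalizations of the resulting elements $Q_1,\ldots,Q_s$ coincide with the tropical elements $q_1,\ldots,q_s$ obtained by the tropical construction using tropical determinants; in particular all such lifts yield the same tropical final elements.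
   Context: $\mathbb{K}$ is the field of Puiseux series with complex coefficients and real exponents; for $x\in\mathbb{K}^*$, $o(x)$ is its smallest exponent with nonzero coefficient, $T(x)=-o(x)$, and $Pc(x)$ is the coefficient of $t^{o(x)}$; for points/hyperplanes given by homogeneous coordinates, $T$ and $Pc$ are applied coordinatewise. $\mathbb{T}=(\mathbb{R},\max,+)$. Hyperplanes $\bigoplus_i a_i\odot x_i$ (tropical) or $\sum a_ix_i=0$ (classical) are identified with the point $[a_1:\dots:a_{d+1}]$ of the dual space. Tropical Cramer's rule: for an $n\times(n+1)$ tropical matrix $O$ (here $n=d$, rows being the homogeneous coordinates of the $d$ given points or hyperplanes), the output is $[\,|O^{1}|_t:\ldots:|O^{n+1}|_t\,]$, where $O^{i}$ is $O$ with column $i$ deleted and $|M|_t=\max_{\sigma}\sum_i m_{i\sigma(i)}$ is the tropical determinant; this gives the stable join of $d$ points / stable intersection of $d$ hyperplanes. The classical step uses classical Cramer's rule (signed maximal minors), and is meaningful when the resulting element is well defined. The construction graph of an element $P$ has as vertices all elements recursively used to construct $P$ (including $P$ and input elements), with an edge from each constructed element to each of the elements from which it is directly constructed. The construction of $P$ is tropically admissible if its construction graph is a tree. *)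

theory Defs
  imports Complex_Main "HOL-Combinatorics.Permutations"
begin

text \<open>A series sum_a c_a t^a is represented by its coefficient function
  real => complex. Membership in K: the support is bounded below and has no
  accumulation point in the reals, i.e. for each r only finitely many exponents
  are <= r (this makes the support well-ordered).\<close>

type_synonym ser = "real \<Rightarrow> complex"

definition is_puiseux :: "ser \<Rightarrow> bool" where
  "is_puiseux f \<longleftrightarrow> (\<forall>r. finite {a. f a \<noteq> 0 \<and> a \<le> r})"

definition szero :: ser where "szero = (\<lambda>_. 0)"
definition sone :: ser where "sone = (\<lambda>r. if r = 0 then 1 else 0)"
definition sadd :: "ser \<Rightarrow> ser \<Rightarrow> ser" where "sadd f g = (\<lambda>r. f r + g r)"
definition sneg :: "ser \<Rightarrow> ser" where "sneg f = (\<lambda>r. - f r)"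
definition smul :: "ser \<Rightarrow> ser \<Rightarrow> ser" where
  "smul f g = (\<lambda>r. \<Sum>a\<in>{a. f a \<noteq> 0 \<and> g (r - a) \<noteq> 0}. f a * g (r - a))"

definition ord_ser :: "ser \<Rightarrow> real" where "ord_ser f = (LEAST a. f a \<noteq> 0)"
definition trop :: "ser \<Rightarrow> real" where "trop f = - ord_ser f"
definition Pc :: "ser \<Rightarrow> complex" where "Pc f = f (ord_ser f)"

definition skip :: "nat \<Rightarrow> nat \<Rightarrow> nat" where
  "skip j c = (if c < j then c else Suc c)"

primrec detK :: "nat \<Rightarrow> (nat \<Rightarrow> nat \<Rightarrow> ser) \<Rightarrow> ser" where
  "detK 0 M = sone"
| "detK (Suc n) M =
     foldr sadd
       (map (\<lambda>j. smul (if even j then M 0 j else sneg (M 0 j))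
                        (detK n (\<lambda>r c. M (Suc r) (skip j c)))) [0..<Suc n]) szero"

definition cramerK :: "nat \<Rightarrow> (nat \<Rightarrow> ser) list \<Rightarrow> (nat \<Rightarrow> ser)" where
  "cramerK d rows = (\<lambda>i. if i \<le> d then
      (if even i then id else sneg) (detK d (\<lambda>r c. (rows ! r) (skip i c)))
    else szero)"

definition tdet :: "nat \<Rightarrow> (nat \<Rightarrow> nat \<Rightarrow> real) \<Rightarrow> real" where
  "tdet n M = Max {(\<Sum>i<n. M i (\<sigma> i)) | \<sigma>. \<sigma> permutes {..<n}}"

definition cramerT :: "nat \<Rightarrow> (nat \<Rightarrow> real) list \<Rightarrow> (nat \<Rightarrow> real)" where
  "cramerT d rows = (\<lambda>i. if i \<le> d then tdet d (\<lambda>r c. (rows ! r) (skip i c)) else 0)"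

text \<open>A construction with N inputs: elements are indexed by naturals; indices
  0..N-1 are the inputs, index N+j is produced by step j, which is the list
  C!j of the indices of the d previously obtained elements it is built from.
  kind k = True means element k is a point, False that it is a hyperplane.\<close>

definition wf_construction :: "nat \<Rightarrow> nat \<Rightarrow> nat list list \<Rightarrow> (nat \<Rightarrow> bool) \<Rightarrow> bool" where
  "wf_construction d N C kind \<longleftrightarrow>
     (\<forall>j<length C. length (C ! j) = d \<and>
        (\<forall>a\<in>set (C ! j). a < N + j \<and> kind a = (\<not> kind (N + j))))"

definition evalK :: "nat \<Rightarrow> nat \<Rightarrow> nat list list \<Rightarrow> (nat \<Rightarrow> nat \<Rightarrow> ser) \<Rightarrow> (nat \<Rightarrow> ser) list" where
  "evalK d N C P = foldl (\<lambda>acc args. acc @ [cramerK d (map (\<lambda>a. acc ! a) args)])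
                         (map P [0..<N]) C"

definition evalT :: "nat \<Rightarrow> nat \<Rightarrow> nat list list \<Rightarrow> (nat \<Rightarrow> nat \<Rightarrow> real) \<Rightarrow> (nat \<Rightarrow> real) list" where
  "evalT d N C p = foldl (\<lambda>acc args. acc @ [cramerT d (map (\<lambda>a. acc ! a) args)])
                         (map p [0..<N]) C"

definition proj_pointK :: "nat \<Rightarrow> (nat \<Rightarrow> ser) \<Rightarrow> bool" where
  "proj_pointK d v \<longleftrightarrow> (\<forall>j\<le>d. is_puiseux (v j)) \<and> (\<exists>j\<le>d. v j \<noteq> szero)"

definition meaningful :: "nat \<Rightarrow> nat \<Rightarrow> nat list list \<Rightarrow> (nat \<Rightarrow> nat \<Rightarrow> ser) \<Rightarrow> bool" where
  "meaningful d N C P \<longleftrightarrow>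
     (\<forall>k<length C. \<exists>j\<le>d. (evalK d N C P ! (N + k)) j \<noteq> szero)"

definition direct_rel :: "nat \<Rightarrow> nat list list \<Rightarrow> (nat \<times> nat) set" where
  "direct_rel N C = {(a, b). N \<le> a \<and> a < N + length C \<and> b \<in> set (C ! (a - N))}"

definition cg_vertices :: "nat \<Rightarrow> nat list list \<Rightarrow> nat \<Rightarrow> nat set" where
  "cg_vertices N C k = {v. (k, v) \<in> (direct_rel N C)\<^sup>*}"

definition cg_edges :: "nat \<Rightarrow> nat list list \<Rightarrow> nat \<Rightarrow> nat set set" where
  "cg_edges N C k = {{a, b} | a b. a \<in> cg_vertices N C k \<and> (a, b) \<in> direct_rel N C}"

definition is_tree :: "'v set \<Rightarrow> 'v set set \<Rightarrow> bool" where
  "is_tree V E \<longleftrightarrow>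
     (\<forall>u\<in>V. \<forall>v\<in>V. (u, v) \<in> {(x, y). {x, y} \<in> E}\<^sup>*) \<and>
     \<not> (\<exists>vs. length vs \<ge> 3 \<and> distinct vs \<and> set vs \<subseteq> V \<and>
            (\<forall>i<length vs. {vs ! i, vs ! ((i + 1) mod length vs)} \<in> E))"

definition trop_admissible :: "nat \<Rightarrow> nat list list \<Rightarrow> nat \<Rightarrow> bool" where
  "trop_admissible N C k \<longleftrightarrow> is_tree (cg_vertices N C k) (cg_edges N C k)"

definition trop_proj_eq :: "nat \<Rightarrow> (nat \<Rightarrow> real) \<Rightarrow> (nat \<Rightarrow> real) \<Rightarrow> bool" where
  "trop_proj_eq d a b \<longleftrightarrow> (\<exists>c. \<forall>j\<le>d. a j = b j + c)"

definition cproj_eq :: "nat \<Rightarrow> (nat \<Rightarrow> complex) \<Rightarrow> (nat \<Rightarrow> complex) \<Rightarrow> bool" where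
  "cproj_eq d a b \<longleftrightarrow> (\<exists>s. s \<noteq> 0 \<and> (\<forall>j\<le>d. a j = s * b j))"

definition torus_hom :: "(nat \<Rightarrow> complex) \<Rightarrow> (nat \<Rightarrow> complex)" where
  "torus_hom x = (\<lambda>j. if j = 0 then 1 else x (j - 1))"

text \<open>tuples (x_1,...,x_N) in ((C^* )^d)^N, stored canonically\<close>
definition torus_tuples :: "nat \<Rightarrow> nat \<Rightarrow> (nat \<Rightarrow> nat \<Rightarrow> complex) set" where
  "torus_tuples d N = {x. \<forall>i j. (i < N \<and> j < d \<longrightarrow> x i j \<noteq> 0) \<and>
                                 (\<not> (i < N \<and> j < d) \<longrightarrow> x i j = 0)}"

definition is_lift :: "nat \<Rightarrow> nat \<Rightarrow> (nat \<Rightarrow> nat \<Rightarrow> ser) \<Rightarrow> (nat \<Rightarrow> nat \<Rightarrow> real) \<Rightarrow> bool" where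
  "is_lift d N P p \<longleftrightarrow>
     (\<forall>i<N. proj_pointK d (P i) \<and> (\<forall>j\<le>d. P i j \<noteq> szero) \<and>
            trop_proj_eq d (\<lambda>j. trop (P i j)) (p i))"

definition has_Pc :: "nat \<Rightarrow> nat \<Rightarrow> (nat \<Rightarrow> nat \<Rightarrow> ser) \<Rightarrow> (nat \<Rightarrow> nat \<Rightarrow> complex) \<Rightarrow> bool" where
  "has_Pc d N P x \<longleftrightarrow> (\<forall>i<N. cproj_eq d (\<lambda>j. Pc (P i j)) (torus_hom (x i)))"

end

theory Submission
  imports Defs "Jordan_Normal_Form.Determinant" "HOL-Computational_Algebra.Polynomial"
begin

lemma puis_bounded: "is_puiseux f \<Longrightarrow> \<exists>m. \<forall>a. f a \<noteq> 0 \<longrightarrow> m \<le> a"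
proof (cases "\<exists>a0. f a0 \<noteq> 0")
  case True
  assume P: "is_puiseux f"
  then obtain a0 where a0: "f a0 \<noteq> 0" using True by blast
  let ?S = "{a. f a \<noteq> 0 \<and> a \<le> a0}"
  have fin: "finite ?S" using P unfolding is_puiseux_def by blast
  have ne: "a0 \<in> ?S" using a0 by simp
  show ?thesis
  proof (intro exI allI impI)
    fix a assume "f a \<noteq> 0"
    show "Min ?S \<le> a"
    proof (cases "a \<le> a0")
      case True then show ?thesis using fin \<open>f a \<noteq> 0\<close> by (intro Min_le) auto
    next
      case False then show ?thesis using Min_le[OF fin ne] by linarith
    qed
  qed
qed auto

lemma smul_sum:
  assumes "finite A" "{a. f a \<noteq> 0 \<and> g (r - a) \<noteq> 0} \<subseteq> A"
  shows "smul f g r = (\<Sum>a\<in>A. f a * g (r - a))"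
  unfolding smul_def
  by (rule sum.mono_neutral_left) (use assms in auto)

lemma smul_comm: "smul f g = smul g f"
proof
  fix r
  show "smul f g r = smul g f r"
    unfolding smul_def
    by (rule sum.reindex_bij_witness[where i="\<lambda>b. r - b" and j="\<lambda>a. r - a"]) auto
qed

lemma puis_zero: "is_puiseux szero" unfolding is_puiseux_def szero_def by auto

lemma puis_one: "is_puiseux sone"
  unfolding is_puiseux_def sone_def
  by (auto intro: finite_subset[of _ "{0}"])

lemma puis_add: "is_puiseux f \<Longrightarrow> is_puiseux g \<Longrightarrow> is_puiseux (sadd f g)"
  unfolding is_puiseux_def sadd_def
proof (intro allI)
  fix r assume "\<forall>r. finite {a. f a \<noteq> 0 \<and> a \<le> r}" "\<forall>r. finite {a. g a \<noteq> 0 \<and> a \<le> r}"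
  then have "finite ({a. f a \<noteq> 0 \<and> a \<le> r} \<union> {a. g a \<noteq> 0 \<and> a \<le> r})" by auto
  then show "finite {a. f a + g a \<noteq> 0 \<and> a \<le> r}" by (rule finite_subset[rotated]) auto
qed

lemma puis_neg: "is_puiseux f \<Longrightarrow> is_puiseux (sneg f)"
  unfolding is_puiseux_def sneg_def by auto

lemma puis_mul:
  assumes F: "is_puiseux f" and G: "is_puiseux g"
  shows "is_puiseux (smul f g)"
  unfolding is_puiseux_def
proof
  fix R
  obtain mf where mf: "\<forall>a. f a \<noteq> 0 \<longrightarrow> mf \<le> a" using puis_bounded[OF F] by blast
  obtain mg where mg: "\<forall>a. g a \<noteq> 0 \<longrightarrow> mg \<le> a" using puis_bounded[OF G] by blast
  let ?A = "{a. f a \<noteq> 0 \<and> a \<le> R - mg}" and ?B = "{b. g b \<noteq> 0 \<and> b \<le> R - mf}"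
  have fin: "finite ((\<lambda>(a,b). a + b) ` (?A \<times> ?B))"
    using F G unfolding is_puiseux_def by auto
  show "finite {a. smul f g a \<noteq> 0 \<and> a \<le> R}"
  proof (rule finite_subset[OF _ fin], clarify)
    fix r assume r: "smul f g r \<noteq> 0" "r \<le> R"
    then obtain a where a: "f a \<noteq> 0" "g (r - a) \<noteq> 0"
      unfolding smul_def by (metis (mono_tags, lifting) empty_Collect_eq sum.empty)
    have "mf \<le> a" "mg \<le> r - a" using a mf mg by auto
    then have "(a, r - a) \<in> ?A \<times> ?B" using a r by auto
    then show "r \<in> (\<lambda>(a,b). a + b) ` (?A \<times> ?B)" by force
  qed
qed

lemma smul_one: "smul sone f = f"
proof
  fix r
  have "smul sone f r = (\<Sum>a\<in>{0}. sone a * f (r - a))"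
    by (rule smul_sum) (auto simp: sone_def)
  then show "smul sone f r = f r" by (simp add: sone_def)
qed

lemma smul_distrib:
  assumes F: "is_puiseux f" and G: "is_puiseux g" and H: "is_puiseux h"
  shows "smul (sadd f g) h = sadd (smul f h) (smul g h)"
proof
  fix r
  obtain mh where mh: "\<forall>a. h a \<noteq> 0 \<longrightarrow> mh \<le> a" using puis_bounded[OF H] by blast
  let ?A = "{a. f a \<noteq> 0 \<and> a \<le> r - mh} \<union> {a. g a \<noteq> 0 \<and> a \<le> r - mh}"
  have fin: "finite ?A" using F G unfolding is_puiseux_def by auto
  have sub: "\<And>k. is_puiseux k \<Longrightarrow> {a. k a \<noteq> 0 \<and> h (r - a) \<noteq> 0} \<subseteq> {a. k a \<noteq> 0 \<and> a \<le> r - mh}"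
    using mh by force
  have e1: "smul (sadd f g) h r = (\<Sum>a\<in>?A. (f a + g a) * h (r - a))"
    by (subst smul_sum[OF fin]) (use mh in \<open>force simp: sadd_def\<close>)+
  have e2: "smul f h r = (\<Sum>a\<in>?A. f a * h (r - a))"
    by (rule smul_sum[OF fin]) (use mh in force)
  have e3: "smul g h r = (\<Sum>a\<in>?A. g a * h (r - a))"
    by (rule smul_sum[OF fin]) (use mh in force)
  show "smul (sadd f g) h r = sadd (smul f h) (smul g h) r"
    using e1 e2 e3 unfolding sadd_def[of "smul f h"] by (simp add: distrib_right sum.distrib)
qed

lemma smul_assoc:
  assumes F: "is_puiseux f" and G: "is_puiseux g" and H: "is_puiseux h"
  shows "smul (smul f g) h = smul f (smul g h)"
proof
  fix r
  obtain mf where mf: "\<forall>a. f a \<noteq> 0 \<longrightarrow> mf \<le> a" using puis_bounded[OF F] by blast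
  obtain mg where mg: "\<forall>a. g a \<noteq> 0 \<longrightarrow> mg \<le> a" using puis_bounded[OF G] by blast
  obtain mh where mh: "\<forall>a. h a \<noteq> 0 \<longrightarrow> mh \<le> a" using puis_bounded[OF H] by blast
  define T where "T = {(a,b). f a \<noteq> 0 \<and> g b \<noteq> 0 \<and> h (r - a - b) \<noteq> 0}"
  have finT: "finite T"
  proof (rule finite_subset)
    show "T \<subseteq> {a. f a \<noteq> 0 \<and> a \<le> r - mg - mh} \<times> {b. g b \<noteq> 0 \<and> b \<le> r - mf - mh}"
      unfolding T_def using mf mg mh by force
    show "finite ({a. f a \<noteq> 0 \<and> a \<le> r - mg - mh} \<times> {b. g b \<noteq> 0 \<and> b \<le> r - mf - mh})"
      using F G unfolding is_puiseux_def by auto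
  qed
  define A where "A = (\<lambda>(a,b). a + b) ` T"
  have finA: "finite A" unfolding A_def using finT by auto
  have finI: "\<And>e. finite {a. f a \<noteq> 0 \<and> g (e - a) \<noteq> 0}"
  proof -
    fix e
    have "{a. f a \<noteq> 0 \<and> g (e - a) \<noteq> 0} \<subseteq> {a. f a \<noteq> 0 \<and> a \<le> e - mg}" using mg by force
    then show "finite {a. f a \<noteq> 0 \<and> g (e - a) \<noteq> 0}"
      by (rule finite_subset) (use F in \<open>auto simp: is_puiseux_def\<close>)
  qed
  have finI2: "\<And>a. finite {b. g b \<noteq> 0 \<and> h (r - a - b) \<noteq> 0}"
  proof -
    fix a
    have "{b. g b \<noteq> 0 \<and> h (r - a - b) \<noteq> 0} \<subseteq> {b. g b \<noteq> 0 \<and> b \<le> r - a - mh}" using mh by force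
    then show "finite {b. g b \<noteq> 0 \<and> h (r - a - b) \<noteq> 0}"
      by (rule finite_subset) (use G in \<open>auto simp: is_puiseux_def\<close>)
  qed
  have "smul (smul f g) h r = (\<Sum>e\<in>A. smul f g e * h (r - e))"
  proof (rule smul_sum[OF finA], clarify)
    fix e assume e: "smul f g e \<noteq> 0" "h (r - e) \<noteq> 0"
    then obtain a where a: "f a \<noteq> 0" "g (e - a) \<noteq> 0"
      unfolding smul_def by (metis (mono_tags, lifting) empty_Collect_eq sum.empty)
    then have "(a, e - a) \<in> T" using e unfolding T_def by auto
    then show "e \<in> A" unfolding A_def by force
  qed
  also have "\<dots> = (\<Sum>e\<in>A. \<Sum>a\<in>{a. f a \<noteq> 0 \<and> g (e - a) \<noteq> 0}. f a * g (e - a) * h (r - e))"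
    unfolding smul_def by (simp add: sum_distrib_right)
  also have "\<dots> = (\<Sum>(e,a)\<in>Sigma A (\<lambda>e. {a. f a \<noteq> 0 \<and> g (e - a) \<noteq> 0}). f a * g (e - a) * h (r - e))"
    by (rule sum.Sigma[OF finA]) (use finI in auto)
  also have "\<dots> = (\<Sum>(a,b)\<in>T. f a * g b * h (r - a - b))"
  proof (rule sum.reindex_bij_witness_not_neutral[where i="\<lambda>(a,b). (a+b, a)" and j="\<lambda>(e,a). (a, e - a)"
        and S'="{(e,a). e \<in> A \<and> f a \<noteq> 0 \<and> g (e - a) \<noteq> 0 \<and> h (r - e) = 0}" and T'="{}"])
    show "finite {(e,a). e \<in> A \<and> f a \<noteq> 0 \<and> g (e - a) \<noteq> 0 \<and> h (r - e) = 0}"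
      by (rule finite_subset[OF _ finite_SigmaI[OF finA finI]]) auto
  qed (auto simp: T_def A_def diff_diff_eq)
  also have "\<dots> = (\<Sum>(a,b)\<in>Sigma (fst ` T) (\<lambda>a. {b. g b \<noteq> 0 \<and> h (r - a - b) \<noteq> 0}). f a * g b * h (r - a - b))"
    by (rule sum.cong) (auto simp: T_def image_iff, metis)
  also have "\<dots> = (\<Sum>a\<in>fst ` T. \<Sum>b\<in>{b. g b \<noteq> 0 \<and> h (r - a - b) \<noteq> 0}. f a * g b * h (r - a - b))"
    by (rule sum.Sigma[symmetric]) (use finT finI2 in auto)
  also have "\<dots> = (\<Sum>a\<in>fst ` T. f a * smul g h (r - a))"
    unfolding smul_def by (simp add: sum_distrib_left mult.assoc diff_diff_eq)
  also have "\<dots> = smul f (smul g h) r"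
  proof (rule smul_sum[symmetric])
    show "finite (fst ` T)" using finT by auto
    show "{a. f a \<noteq> 0 \<and> smul g h (r - a) \<noteq> 0} \<subseteq> fst ` T"
    proof clarify
      fix a assume a: "f a \<noteq> 0" "smul g h (r - a) \<noteq> 0"
      then obtain b where b: "g b \<noteq> 0" "h (r - a - b) \<noteq> 0"
        unfolding smul_def by (metis (mono_tags, lifting) empty_Collect_eq sum.empty)
      then have "(a,b) \<in> T" using a unfolding T_def by auto
      then show "a \<in> fst ` T" by force
    qed
  qed
  finally show "smul (smul f g) h r = smul f (smul g h) r" .
qed

typedef puis = "{f::ser. is_puiseux f}" using puis_zero by blast

setup_lifting type_definition_puis

instantiation puis :: comm_ring_1
begin
lift_definition zero_puis :: puis is szero by (rule puis_zero)
lift_definition one_puis :: puis is sone by (rule puis_one)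
lift_definition plus_puis :: "puis \<Rightarrow> puis \<Rightarrow> puis" is sadd by (rule puis_add)
lift_definition uminus_puis :: "puis \<Rightarrow> puis" is sneg by (rule puis_neg)
lift_definition minus_puis :: "puis \<Rightarrow> puis \<Rightarrow> puis" is "\<lambda>f g. sadd f (sneg g)"
  by (rule puis_add, simp, rule puis_neg)
lift_definition times_puis :: "puis \<Rightarrow> puis \<Rightarrow> puis" is smul by (rule puis_mul)
instance
proof
  fix a b c :: puis
  show "a * b * c = a * (b * c)" by transfer (rule smul_assoc)
  show "a * b = b * a" by transfer (rule smul_comm)
  show "1 * a = a" by transfer (rule smul_one)
  show "(a + b) * c = a * c + b * c" by transfer (rule smul_distrib)
  show "a + b + c = a + (b + c)" by transfer (auto simp: sadd_def)
  show "a + b = b + a" by transfer (auto simp: sadd_def)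
  show "0 + a = a" by transfer (auto simp: sadd_def szero_def)
  show "- a + a = 0" by transfer (auto simp: sadd_def szero_def sneg_def)
  show "a - b = a + - b" by transfer simp
  show "0 \<noteq> (1::puis)" by transfer (auto simp: szero_def sone_def fun_eq_iff)
qed
end

lemma Rep_puis_zero: "Rep_puis 0 = szero" by transfer simp
lemma Rep_puis_one: "Rep_puis 1 = sone" by transfer simp
lemma Rep_puis_plus: "Rep_puis (a + b) = sadd (Rep_puis a) (Rep_puis b)" by transfer simp
lemma Rep_puis_uminus: "Rep_puis (- a) = sneg (Rep_puis a)" by transfer simp
lemma Rep_puis_times: "Rep_puis (a * b) = smul (Rep_puis a) (Rep_puis b)" by transfer simp
lemma Rep_puis_ok: "is_puiseux (Rep_puis a)" using Rep_puis by auto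

lemma Rep_Abs_puis: "is_puiseux f \<Longrightarrow> Rep_puis (Abs_puis f) = f"
  by (simp add: Abs_puis_inverse)

lemma Rep_sum_list: "Rep_puis (sum_list (map f xs)) = foldr sadd (map (\<lambda>x. Rep_puis (f x)) xs) szero"
  by (induction xs) (auto simp: Rep_puis_zero Rep_puis_plus)

lemma smul_sneg: "smul (sneg f) g = sneg (smul f g)"
  unfolding smul_def sneg_def by (simp add: sum_negf)

definition matK :: "nat \<Rightarrow> (nat \<Rightarrow> nat \<Rightarrow> ser) \<Rightarrow> puis mat" where
  "matK n M = mat n n (\<lambda>(r,c). Abs_puis (M r c))"

lemma detK_det:
  assumes "\<forall>r<n. \<forall>c<n. is_puiseux (M r c)"
  shows "detK n M = Rep_puis (det (matK n M))"
  using assms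
proof (induction n arbitrary: M)
  case 0
  have "det (matK 0 M) = 1" unfolding matK_def det_def by simp
  then show ?case by (simp add: Rep_puis_one)
next
  case (Suc n)
  let ?A = "matK (Suc n) M"
  have A: "?A \<in> carrier_mat (Suc n) (Suc n)" unfolding matK_def by auto
  have "det ?A = (\<Sum>j<Suc n. ?A $$ (0,j) * cofactor ?A 0 j)"
    by (rule laplace_expansion_row[OF A]) simp
  also have "\<dots> = sum_list (map (\<lambda>j. ?A $$ (0,j) * cofactor ?A 0 j) [0..<Suc n])"
    by (subst sum_set_upt_conv_sum_list_nat[symmetric]) (simp add: atLeast0LessThan)
  finally have e: "det ?A = \<dots>" .
  have trm: "Rep_puis (?A $$ (0,j) * cofactor ?A 0 j) =
      smul (if even j then M 0 j else sneg (M 0 j)) (detK n (\<lambda>r c. M (Suc r) (skip j c)))"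
    if j: "j < Suc n" for j
  proof -
    have md: "mat_delete ?A 0 j = matK n (\<lambda>r c. M (Suc r) (skip j c))"
      by (rule eq_matI) (auto simp: mat_delete_def matK_def skip_def)
    have IH: "detK n (\<lambda>r c. M (Suc r) (skip j c)) = Rep_puis (det (matK n (\<lambda>r c. M (Suc r) (skip j c))))"
      using Suc.prems j by (intro Suc.IH) (auto simp: skip_def)
    have a: "?A $$ (0,j) = Abs_puis (M 0 j)" using j by (simp add: matK_def)
    have Ma: "Rep_puis (Abs_puis (M 0 j)) = M 0 j" using Suc.prems j by (simp add: Rep_Abs_puis)
    show ?thesis
    proof (cases "even j")
      case True
      then show ?thesis unfolding cofactor_def md a IH
        by (simp add: Rep_puis_times Ma)
    next
      case False
      then have "Abs_puis (M 0 j) * ((-1) ^ (0 + j) * det (matK n (\<lambda>r c. M (Suc r) (skip j c))))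
          = (- Abs_puis (M 0 j)) * det (matK n (\<lambda>r c. M (Suc r) (skip j c)))" by simp
      then show ?thesis using False unfolding cofactor_def md a IH
        by (simp add: Rep_puis_times Rep_puis_uminus Ma smul_sneg)
    qed
  qed
  show ?case
    unfolding e Rep_sum_list detK.simps
    by (rule arg_cong[where f="\<lambda>xs. foldr sadd xs szero"], rule map_cong) (auto simp: trm)
qed

definition lo :: "ser \<Rightarrow> real \<Rightarrow> complex \<Rightarrow> bool" where
  "lo f v c \<longleftrightarrow> (\<forall>a<v. f a = 0) \<and> f v = c"

lemma lo_mul:
  assumes "lo f v c" "lo g w e" shows "lo (smul f g) (v + w) (c * e)"
proof -
  have f: "\<And>a. f a \<noteq> 0 \<Longrightarrow> v \<le> a" and g: "\<And>a. g a \<noteq> 0 \<Longrightarrow> w \<le> a"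
    using assms unfolding lo_def by (meson not_le)+
  have lt: "smul f g r = 0" if "r < v + w" for r
  proof -
    have "{a. f a \<noteq> 0 \<and> g (r - a) \<noteq> 0} = {}" using f g that by force
    then show ?thesis unfolding smul_def by (subst \<open>_ = {}\<close>) simp
  qed
  have "smul f g (v + w) = (\<Sum>a\<in>{v}. f a * g (v + w - a))"
    by (rule smul_sum) (use f g in force)+
  then show ?thesis using assms lt unfolding lo_def by simp
qed

lemma lo_add: "lo f v c \<Longrightarrow> lo g v e \<Longrightarrow> lo (sadd f g) v (c + e)"
  unfolding lo_def sadd_def by auto

lemma lo_neg: "lo f v c \<Longrightarrow> lo (sneg f) v (- c)"
  unfolding lo_def sneg_def by auto

lemma lo_zero: "lo szero v 0" unfolding lo_def szero_def by auto
lemma lo_one: "lo sone 0 1" unfolding lo_def sone_def by auto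

lemma lo_weaken: "lo f v1 c \<Longrightarrow> v \<le> v1 \<Longrightarrow> lo f v (if v = v1 then c else 0)"
  unfolding lo_def by auto

definition loP :: "puis \<Rightarrow> real \<Rightarrow> complex \<Rightarrow> bool" where
  "loP a v c \<longleftrightarrow> lo (Rep_puis a) v c"

lemma loP_sum:
  assumes "finite S" "\<forall>s\<in>S. loP (F s) (V s) (K s) \<and> v \<le> V s"
  shows "loP (\<Sum>s\<in>S. F s) v (\<Sum>s\<in>{s\<in>S. V s = v}. K s)"
  using assms
proof (induction S rule: finite_induct)
  case empty
  then show ?case by (simp add: loP_def Rep_puis_zero lo_zero)
next
  case (insert x S)
  have IH: "loP (sum F S) v (sum K {s \<in> S. V s = v})" using insert by auto
  have x: "loP (F x) v (if v = V x then K x else 0)"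
    using insert lo_weaken unfolding loP_def by auto
  have "loP (F x + sum F S) v ((if v = V x then K x else 0) + sum K {s \<in> S. V s = v})"
    using lo_add x IH unfolding loP_def Rep_puis_plus by blast
  moreover have "{s \<in> insert x S. V s = v} = (if V x = v then insert x {s \<in> S. V s = v} else {s \<in> S. V s = v})"
    by auto
  ultimately show ?case using insert by auto
qed

lemma loP_prod:
  assumes "finite I" "\<forall>i\<in>I. loP (F i) (V i) (K i)"
  shows "loP (\<Prod>i\<in>I. F i) (\<Sum>i\<in>I. V i) (\<Prod>i\<in>I. K i)"
  using assms
proof (induction I rule: finite_induct)
  case empty
  then show ?case by (simp add: loP_def Rep_puis_one lo_one)
next
  case (insert x S)
  then show ?case by (simp add: loP_def Rep_puis_times lo_mul)
qed

lemma loP_sign: "loP (signof p) 0 (of_int (sign p))"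
proof (cases "evenperm p")
  case True
  then show ?thesis by (simp add: sign_def loP_def Rep_puis_one lo_one)
next
  case False
  then show ?thesis using lo_neg[OF lo_one]
    by (simp add: sign_def loP_def Rep_puis_one Rep_puis_uminus)
qed

lemma loP_det:
  assumes A: "A \<in> carrier_mat n n"
    and E: "\<forall>r<n. \<forall>c<n. loP (A $$ (r,c)) (V r c) (K r c)"
    and B: "\<forall>\<sigma>. \<sigma> permutes {0..<n} \<longrightarrow> v \<le> (\<Sum>i=0..<n. V i (\<sigma> i))"
  shows "loP (det A) v (\<Sum>\<sigma>\<in>{\<sigma>. \<sigma> permutes {0..<n} \<and> (\<Sum>i=0..<n. V i (\<sigma> i)) = v}.
                         of_int (sign \<sigma>) * (\<Prod>i=0..<n. K i (\<sigma> i)))"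
proof -
  have fin: "finite {\<sigma>. \<sigma> permutes {0..<n}}" by (simp add: finite_permutations)
  have t: "loP (signof \<sigma> * (\<Prod>i=0..<n. A $$ (i, \<sigma> i))) (0 + (\<Sum>i=0..<n. V i (\<sigma> i)))
              (of_int (sign \<sigma>) * (\<Prod>i=0..<n. K i (\<sigma> i)))" if s: "\<sigma> permutes {0..<n}" for \<sigma>
  proof -
    have "loP (\<Prod>i=0..<n. A $$ (i, \<sigma> i)) (\<Sum>i=0..<n. V i (\<sigma> i)) (\<Prod>i=0..<n. K i (\<sigma> i))"
      by (rule loP_prod) (use E permutes_in_image[OF s] in auto)
    then show ?thesis using loP_sign[of \<sigma>] lo_mul unfolding loP_def Rep_puis_times by blast
  qed
  have "loP (\<Sum>\<sigma>\<in>{\<sigma>. \<sigma> permutes {0..<n}}. signof \<sigma> * (\<Prod>i=0..<n. A $$ (i, \<sigma> i))) v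
         (\<Sum>\<sigma>\<in>{s\<in>{\<sigma>. \<sigma> permutes {0..<n}}. (\<Sum>i=0..<n. V i (s i)) = v}. of_int (sign \<sigma>) * (\<Prod>i=0..<n. K i (\<sigma> i)))"
    by (rule loP_sum[OF fin]) (use t B in auto)
  then show ?thesis using det_def'[OF A] by simp
qed

lemma lo_trop:
  assumes "lo f v c" "c \<noteq> 0"
  shows "f \<noteq> szero" "ord_ser f = v" "trop f = - v" "Pc f = c"
proof -
  have o: "ord_ser f = v" unfolding ord_ser_def
    by (rule Least_equality) (use assms in \<open>auto simp: lo_def not_le[symmetric]\<close>)
  show "ord_ser f = v" by (fact o)
  show "trop f = - v" by (simp add: trop_def o)
  show "Pc f = c" using assms by (simp add: Pc_def o lo_def)
  show "f \<noteq> szero" using assms by (auto simp: lo_def szero_def)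
qed

lemma lo_input:
  assumes "is_puiseux f" "f \<noteq> szero"
  shows "lo f (ord_ser f) (Pc f)" "Pc f \<noteq> 0"
proof -
  obtain a0 where a0: "f a0 \<noteq> 0" using assms(2) by (auto simp: szero_def fun_eq_iff)
  let ?S = "{a. f a \<noteq> 0 \<and> a \<le> a0}"
  have fin: "finite ?S" using assms unfolding is_puiseux_def by blast
  have ne: "?S \<noteq> {}" using a0 by auto
  define m where "m = Min ?S"
  have m: "f m \<noteq> 0" "m \<le> a0" using Min_in[OF fin ne] unfolding m_def by auto
  have le: "m \<le> a" if "f a \<noteq> 0" for a
  proof (cases "a \<le> a0")
    case True then show ?thesis using fin that unfolding m_def by (intro Min_le) auto
  next
    case False then show ?thesis using m by linarith
  qed
  have o: "ord_ser f = m" unfolding ord_ser_def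
    by (rule Least_equality) (use m le in auto)
  show "lo f (ord_ser f) (Pc f)" unfolding lo_def o Pc_def using le by force
  show "Pc f \<noteq> 0" unfolding Pc_def o using m by simp
qed

lemma foldl_snoc_props:
  fixes F :: "'a list \<Rightarrow> 'b \<Rightarrow> 'a" and init :: "'a list"
  defines "R \<equiv> \<lambda>C. foldl (\<lambda>acc args. acc @ [F acc args]) init C"
  shows "length (R C) = length init + length C \<and>
         (\<forall>e<length init. R C ! e = init ! e) \<and>
         (\<forall>j<length C. R C ! (length init + j) = F (take (length init + j) (R C)) (C ! j))"
proof (induction C rule: rev_induct)
  case Nil
  then show ?case unfolding R_def by simp
next
  case (snoc c C)
  have eq: "R (C @ [c]) = R C @ [F (R C) c]" unfolding R_def by simp
  show ?case
  proof (intro conjI allI impI)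
    show "length (R (C @ [c])) = length init + length (C @ [c])" using snoc eq by simp
    fix e assume "e < length init"
    then show "R (C @ [c]) ! e = init ! e" using snoc eq by (simp add: nth_append)
  next
    fix j assume j: "j < length (C @ [c])"
    show "R (C @ [c]) ! (length init + j) = F (take (length init + j) (R (C @ [c]))) ((C @ [c]) ! j)"
    proof (cases "j < length C")
      case True
      then show ?thesis using snoc eq by (simp add: nth_append)
    next
      case False
      then have "j = length C" using j by simp
      then show ?thesis using snoc eq by (simp add: nth_append)
    qed
  qed
qed

lemma foldl_snoc_step:
  assumes "j < length C" "\<forall>a\<in>set (C ! j). a < length init + j"
    and G: "\<And>acc acc' args. (\<forall>a\<in>set args. a < length acc \<and> acc ! a = acc' ! a) \<Longrightarrow> F acc args = F acc' args"
  shows "foldl (\<lambda>acc args. acc @ [F acc args]) init C ! (length init + j) =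
         F (foldl (\<lambda>acc args. acc @ [F acc args]) init C) (C ! j)"
proof -
  let ?R = "foldl (\<lambda>acc args. acc @ [F acc args]) init C"
  note props = foldl_snoc_props[of F init C]
  have "?R ! (length init + j) = F (take (length init + j) ?R) (C ! j)" using props assms(1) by blast
  also have "\<dots> = F ?R (C ! j)"
    by (rule G) (use assms(1,2) props in auto)
  finally show ?thesis .
qed

lemma wf_args: "wf_construction d N C kind \<Longrightarrow> k < length C \<Longrightarrow>
   length (C ! k) = d \<and> (\<forall>a\<in>set (C ! k). a < N + k)"
  unfolding wf_construction_def by auto

lemma evalK_len: "length (evalK d N C P) = N + length C"
  using foldl_snoc_props unfolding evalK_def by (metis length_map length_upt minus_nat.diff_0)

lemma evalK_in: "i < N \<Longrightarrow> evalK d N C P ! i = P i"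
  using foldl_snoc_props[of _ "map P [0..<N]" C] unfolding evalK_def by simp

lemma evalK_step: "wf_construction d N C kind \<Longrightarrow> k < length C \<Longrightarrow>
   evalK d N C P ! (N + k) = cramerK d (map (\<lambda>a. evalK d N C P ! a) (C ! k))"
  unfolding evalK_def
  by (rule foldl_snoc_step[of k C "map P [0..<N]" "\<lambda>acc args. cramerK d (map (\<lambda>a. acc ! a) args)", simplified])
     (use wf_args[of d N C kind k] in \<open>auto cong: map_cong\<close>)

lemma evalT_len: "length (evalT d N C p) = N + length C"
  using foldl_snoc_props unfolding evalT_def by (metis length_map length_upt minus_nat.diff_0)

lemma evalT_in: "i < N \<Longrightarrow> evalT d N C p ! i = p i"
  using foldl_snoc_props[of _ "map p [0..<N]" C] unfolding evalT_def by simp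

lemma evalT_step: "wf_construction d N C kind \<Longrightarrow> k < length C \<Longrightarrow>
   evalT d N C p ! (N + k) = cramerT d (map (\<lambda>a. evalT d N C p ! a) (C ! k))"
  unfolding evalT_def
  by (rule foldl_snoc_step[of k C "map p [0..<N]" "\<lambda>acc args. cramerT d (map (\<lambda>a. acc ! a) args)", simplified])
     (use wf_args[of d N C kind k] in \<open>auto cong: map_cong\<close>)

definition opt :: "nat \<Rightarrow> (nat \<Rightarrow> nat \<Rightarrow> real) \<Rightarrow> (nat \<Rightarrow> nat) set" where
  "opt n M = {\<sigma>. \<sigma> permutes {0..<n} \<and> (\<Sum>i=0..<n. M i (\<sigma> i)) = tdet n M}"

definition cramerG :: "nat \<Rightarrow> (nat \<Rightarrow> real) list \<Rightarrow> (nat \<Rightarrow> 'a::comm_ring_1) list \<Rightarrow> (nat \<Rightarrow> 'a)" where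
  "cramerG d trows grows = (\<lambda>i. if i \<le> d then
     (if even i then 1 else -1) *
     (\<Sum>\<sigma>\<in>opt d (\<lambda>r c. (trows ! r) (skip i c)).
        of_int (sign \<sigma>) * (\<Prod>r=0..<d. (grows ! r) (skip i (\<sigma> r))))
   else 0)"

definition evalG :: "nat \<Rightarrow> nat \<Rightarrow> nat list list \<Rightarrow> (nat \<Rightarrow> nat \<Rightarrow> real) \<Rightarrow> (nat \<Rightarrow> nat \<Rightarrow> 'a::comm_ring_1) \<Rightarrow> (nat \<Rightarrow> 'a) list" where
  "evalG d N C p X = foldl (\<lambda>acc args. acc @ [cramerG d (map (\<lambda>a. evalT d N C p ! a) args) (map (\<lambda>a. acc ! a) args)])
                         (map X [0..<N]) C"

lemma evalG_len: "length (evalG d N C p X) = N + length C"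
  using foldl_snoc_props unfolding evalG_def by (metis length_map length_upt minus_nat.diff_0)

lemma evalG_in: "i < N \<Longrightarrow> evalG d N C p X ! i = X i"
  using foldl_snoc_props[of _ "map X [0..<N]" C] unfolding evalG_def by simp

lemma evalG_step: "wf_construction d N C kind \<Longrightarrow> k < length C \<Longrightarrow>
   evalG d N C p X ! (N + k) = cramerG d (map (\<lambda>a. evalT d N C p ! a) (C ! k)) (map (\<lambda>a. evalG d N C p X ! a) (C ! k))"
  unfolding evalG_def
  by (rule foldl_snoc_step[of k C "map X [0..<N]" "\<lambda>acc args. cramerG d (map (\<lambda>a. evalT d N C p ! a) args) (map (\<lambda>a. acc ! a) args)", simplified])
     (use wf_args[of d N C kind k] in \<open>auto cong: map_cong\<close>)

lemma tdet_ge: "\<sigma> permutes {0..<n} \<Longrightarrow> (\<Sum>i=0..<n. M i (\<sigma> i)) \<le> tdet n M"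
  unfolding tdet_def
  by (rule Max_ge) (auto simp: finite_permutations lessThan_atLeast0 intro!: exI[of _ \<sigma>])

lemma opt_ne: "opt n M \<noteq> {}"
proof -
  let ?S = "{(\<Sum>i<n. M i (\<sigma> i)) | \<sigma>. \<sigma> permutes {..<n}}"
  have fin: "finite ?S" using finite_permutations[of "{..<n}"] by (simp add: setcompr_eq_image)
  have ne: "?S \<noteq> {}" using permutes_id[of "{..<n}"] by blast
  have "tdet n M \<in> ?S" unfolding tdet_def using Max_in[OF fin ne] .
  then obtain \<sigma> where "\<sigma> permutes {..<n}" "tdet n M = (\<Sum>i<n. M i (\<sigma> i))" by auto
  then have "\<sigma> \<in> opt n M" unfolding opt_def by (simp add: lessThan_atLeast0)
  then show ?thesis by blast
qed

lemma opt_fin: "finite (opt n M)"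
  unfolding opt_def by (rule finite_subset[OF _ finite_permutations[of "{0..<n}"]]) auto

lemma skip_le: "c < d \<Longrightarrow> j \<le> d \<Longrightarrow> skip j c \<le> d"
  unfolding skip_def by auto

lemma det_step_lo:
  fixes d :: nat and j :: nat
    and Mk :: "nat \<Rightarrow> nat \<Rightarrow> ser" and Tt :: "nat \<Rightarrow> nat \<Rightarrow> real" and Gg :: "nat \<Rightarrow> nat \<Rightarrow> complex"
    and H :: "nat \<Rightarrow> real" and L :: "nat \<Rightarrow> complex"
  assumes E: "\<forall>r<d. \<forall>c<d. is_puiseux (Mk r c) \<and> lo (Mk r c) (- Tt r c - H r) (L r * Gg r c)"
  shows "is_puiseux (detK d Mk) \<and>
    lo (detK d Mk) (- tdet d Tt - (\<Sum>r=0..<d. H r))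
       ((\<Prod>r=0..<d. L r) * (\<Sum>\<sigma>\<in>opt d Tt. of_int (sign \<sigma>) * (\<Prod>r=0..<d. Gg r (\<sigma> r))))"
proof -
  have dk: "detK d Mk = Rep_puis (det (matK d Mk))" using E by (intro detK_det) auto
  have A: "matK d Mk \<in> carrier_mat d d" unfolding matK_def by auto
  let ?V = "\<lambda>r c. - Tt r c - H r" and ?K = "\<lambda>r c. L r * Gg r c"
  let ?v = "- tdet d Tt - (\<Sum>r=0..<d. H r)"
  have sumV: "(\<Sum>i=0..<d. ?V i (\<sigma> i)) = - (\<Sum>i=0..<d. Tt i (\<sigma> i)) - (\<Sum>r=0..<d. H r)" for \<sigma>
    by (simp add: sum_subtractf sum_negf)
  have "loP (det (matK d Mk)) ?v
      (\<Sum>\<sigma>\<in>{\<sigma>. \<sigma> permutes {0..<d} \<and> (\<Sum>i=0..<d. ?V i (\<sigma> i)) = ?v}.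
          of_int (sign \<sigma>) * (\<Prod>i=0..<d. ?K i (\<sigma> i)))"
  proof (rule loP_det[OF A])
    show "\<forall>r<d. \<forall>c<d. loP (matK d Mk $$ (r, c)) (?V r c) (?K r c)"
      using E by (auto simp: loP_def matK_def Rep_Abs_puis)
    show "\<forall>\<sigma>. \<sigma> permutes {0..<d} \<longrightarrow> ?v \<le> (\<Sum>i=0..<d. ?V i (\<sigma> i))"
      using tdet_ge[of _ d Tt] unfolding sumV by force
  qed
  moreover have "{\<sigma>. \<sigma> permutes {0..<d} \<and> (\<Sum>i=0..<d. ?V i (\<sigma> i)) = ?v} = opt d Tt"
    unfolding opt_def sumV by auto
  moreover have "(\<Sum>\<sigma>\<in>opt d Tt. of_int (sign \<sigma>) * (\<Prod>i=0..<d. ?K i (\<sigma> i))) =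
      (\<Prod>r=0..<d. L r) * (\<Sum>\<sigma>\<in>opt d Tt. of_int (sign \<sigma>) * (\<Prod>r=0..<d. Gg r (\<sigma> r)))"
    by (simp add: prod.distrib sum_distrib_left mult.left_commute)
  ultimately show ?thesis using dk Rep_puis_ok unfolding loP_def by auto
qed

lemma main_inv:
  assumes wf: "wf_construction d N C kind"
    and lift: "is_lift d N P p" and hpc: "has_Pc d N P x"
  shows "e < N + length C \<Longrightarrow> \<exists>h lam. lam \<noteq> 0 \<and> (\<forall>j\<le>d. is_puiseux ((evalK d N C P ! e) j) \<and>
           lo ((evalK d N C P ! e) j) (- (evalT d N C p ! e) j - h)
              (lam * (evalG d N C p (\<lambda>i. torus_hom (x i)) ! e) j))"
proof (induction e rule: less_induct)
  case (less e)
  let ?K = "evalK d N C P" and ?T = "evalT d N C p" and ?G = "evalG d N C p (\<lambda>i. torus_hom (x i))"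
  show ?case
  proof (cases "e < N")
    case True
    have pp: "proj_pointK d (P e)" and nz: "\<forall>j\<le>d. P e j \<noteq> szero"
      and tp: "trop_proj_eq d (\<lambda>j. trop (P e j)) (p e)"
      using lift True unfolding is_lift_def by auto
    obtain c where c: "\<forall>j\<le>d. trop (P e j) = p e j + c" using tp unfolding trop_proj_eq_def by auto
    obtain s where s: "s \<noteq> 0" "\<forall>j\<le>d. Pc (P e j) = s * torus_hom (x e) j"
      using hpc True unfolding has_Pc_def cproj_eq_def by auto
    have pu: "\<forall>j\<le>d. is_puiseux (P e j)" using pp unfolding proj_pointK_def by auto
    show ?thesis
    proof (intro exI conjI allI impI)
      show "s \<noteq> 0" by (fact s(1))
      fix j assume j: "j \<le> d"
      show "is_puiseux ((?K ! e) j)" using pu j True by (simp add: evalK_in)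
      have "lo (P e j) (ord_ser (P e j)) (Pc (P e j))" using lo_input pu nz j by blast
      moreover have "ord_ser (P e j) = - p e j - c" using c j unfolding trop_def by force
      ultimately show "lo ((?K ! e) j) (- (?T ! e) j - c) (s * (?G ! e) j)"
        using True s j by (simp add: evalK_in evalT_in evalG_in)
    qed
  next
    case False
    then obtain k where k: "e = N + k" "k < length C" using less.prems by (metis add_diff_inverse_nat add_less_cancel_left)
    let ?args = "C ! k"
    have args: "length ?args = d" "\<forall>a\<in>set ?args. a < N + k" using wf_args[OF wf k(2)] by auto
    have "\<forall>a\<in>set ?args. \<exists>h lam. lam \<noteq> 0 \<and> (\<forall>j\<le>d. is_puiseux ((?K ! a) j) \<and>
           lo ((?K ! a) j) (- (?T ! a) j - h) (lam * (?G ! a) j))"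
      using less.IH args k by auto
    then obtain H L where HL: "\<forall>a\<in>set ?args. L a \<noteq> 0 \<and> (\<forall>j\<le>d. is_puiseux ((?K ! a) j) \<and>
           lo ((?K ! a) j) (- (?T ! a) j - H a) (L a * (?G ! a) j))"
      by metis
    let ?h = "\<Sum>r=0..<d. H (?args ! r)" and ?lam = "\<Prod>r=0..<d. L (?args ! r)"
    have argr: "\<And>r. r < d \<Longrightarrow> ?args ! r \<in> set ?args" using args by auto
    show ?thesis
    proof (intro exI conjI allI impI)
      show "?lam \<noteq> 0" using HL argr by auto
      fix j assume j: "j \<le> d"
      let ?Mk = "\<lambda>r c. (map (\<lambda>a. ?K ! a) ?args ! r) (skip j c)"
      let ?Tt = "\<lambda>r c. (map (\<lambda>a. ?T ! a) ?args ! r) (skip j c)"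
      let ?Gg = "\<lambda>r c. (map (\<lambda>a. ?G ! a) ?args ! r) (skip j c)"
      have E: "\<forall>r<d. \<forall>c<d. is_puiseux (?Mk r c) \<and> lo (?Mk r c) (- ?Tt r c - H (?args ! r)) (L (?args ! r) * ?Gg r c)"
        using HL argr args(1) skip_le j by auto
      note st = det_step_lo[OF E]
      have eK: "(?K ! e) j = (if even j then id else sneg) (detK d ?Mk)"
        using evalK_step[OF wf k(2)] j k(1) by (simp add: cramerK_def)
      have eT: "(?T ! e) j = tdet d ?Tt"
        using evalT_step[OF wf k(2)] j k(1) by (simp add: cramerT_def)
      have eG: "(?G ! e) j = (if even j then 1 else -1) *
          (\<Sum>\<sigma>\<in>opt d ?Tt. of_int (sign \<sigma>) * (\<Prod>r=0..<d. ?Gg r (\<sigma> r)))"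
        using evalG_step[OF wf k(2), where p=p and X="\<lambda>i. torus_hom (x i)"] j k(1) by (simp add: cramerG_def)
      show "is_puiseux ((?K ! e) j)" using st eK puis_neg by auto
      show "lo ((?K ! e) j) (- (?T ! e) j - ?h) (?lam * (?G ! e) j)"
      proof (cases "even j")
        case True
        then show ?thesis using st eK eT eG by simp
      next
        case False
        then show ?thesis using lo_neg[OF conjunct2[OF st]] eK eT eG by simp
      qed
    qed
  qed
qed

lemma evalG_cong:
  assumes "\<forall>i<N. X i = Y i"
  shows "evalG d N C p X = evalG d N C p Y"
proof -
  have "map X [0..<N] = map Y [0..<N]" using assms by auto
  then show ?thesis unfolding evalG_def by (simp only:)
qed

lemma evalG_poly:
  fixes Xp :: "nat \<Rightarrow> nat \<Rightarrow> complex poly" and M :: complex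
  assumes wf: "wf_construction d N C kind"
  shows "e < N + length C \<Longrightarrow> evalG d N C p (\<lambda>i j. poly (Xp i j) M) ! e = (\<lambda>j. poly ((evalG d N C p Xp ! e) j) M)"
proof (induction e rule: less_induct)
  case (less e)
  show ?case
  proof (cases "e < N")
    case True
    then show ?thesis by (simp add: evalG_in)
  next
    case False
    then obtain k where k: "e = N + k" "k < length C" using less.prems by (metis add_diff_inverse_nat add_less_cancel_left)
    have args: "length (C ! k) = d" "\<forall>a\<in>set (C ! k). a < N + k" using wf_args[OF wf k(2)] by auto
    have IH: "\<And>r. r < d \<Longrightarrow> evalG d N C p (\<lambda>i j. poly (Xp i j) M) ! (C ! k ! r) =
        (\<lambda>j. poly ((evalG d N C p Xp ! (C ! k ! r)) j) M)"
      using less.IH args k by auto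
    show ?thesis
    proof
      fix j
      show "(evalG d N C p (\<lambda>i j. poly (Xp i j) M) ! e) j = poly ((evalG d N C p Xp ! e) j) M"
        unfolding k(1) evalG_step[OF wf k(2)] cramerG_def
        using args IH by (auto simp: poly_sum poly_prod intro!: sum.cong prod.cong)
    qed
  qed
qed

definition Xp :: "nat \<Rightarrow> nat \<Rightarrow> nat \<Rightarrow> complex poly" where
  "Xp d i j = (if j \<le> d then monom 1 (j * Suc d ^ i) else 0)"


lemma divhelp: "(x::nat) < q \<Longrightarrow> (x + y * q) div q = y"
  by simp

lemma digits_bound:
  fixes B :: nat
  shows "\<forall>i<n. a i < B \<Longrightarrow> (\<Sum>i<n. a i * B ^ i) < B ^ n"
proof (induction n)
  case 0 then show ?case by simp
next
  case (Suc n)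
  have "(\<Sum>i<Suc n. a i * B ^ i) = (\<Sum>i<n. a i * B ^ i) + a n * B ^ n" by simp
  also have "\<dots> < B ^ n + a n * B ^ n" using Suc by simp
  also have "\<dots> = (a n + 1) * B ^ n" by simp
  also have "\<dots> \<le> B * B ^ n" using Suc.prems by (intro mult_right_mono) auto
  finally show ?case by simp
qed

lemma digits_unique:
  fixes B :: nat
  shows "\<forall>i<n. a i < B \<Longrightarrow> \<forall>i<n. b i < B \<Longrightarrow> (\<Sum>i<n. a i * B ^ i) = (\<Sum>i<n. b i * B ^ i) \<Longrightarrow> \<forall>i<n. a i = b i"
proof (induction n)
  case 0 then show ?case by simp
next
  case (Suc n)
  define Sa where "Sa = (\<Sum>i<n. a i * B ^ i)"
  define Sb where "Sb = (\<Sum>i<n. b i * B ^ i)"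
  have ba: "Sa < B ^ n" unfolding Sa_def by (rule digits_bound) (use Suc.prems in auto)
  have bb: "Sb < B ^ n" unfolding Sb_def by (rule digits_bound) (use Suc.prems in auto)
  have eq: "Sa + a n * B ^ n = Sb + b n * B ^ n" using Suc.prems(3) unfolding Sa_def Sb_def by simp
  have "a n = (Sa + a n * B ^ n) div B ^ n" by (rule divhelp[OF ba, symmetric])
  also have "\<dots> = (Sb + b n * B ^ n) div B ^ n" by (simp only: eq)
  also have "\<dots> = b n" by (rule divhelp[OF bb])
  finally have an: "a n = b n" .
  then have "Sa = Sb" using eq by simp
  then have "\<forall>i<n. a i = b i"
    by (intro Suc.IH) (use Suc.prems in \<open>auto simp: Sa_def Sb_def\<close>)
  then show ?case using an by (auto simp: less_Suc_eq)
qed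
lemma skip_inj: "skip j a = skip j b \<Longrightarrow> a = b"
  unfolding skip_def by (auto split: if_splits)

lemma skip_ne: "skip j c \<noteq> j"
  unfolding skip_def by auto

lemma cols_determine:
  assumes s: "\<sigma> permutes {0..<d}" and j: "j \<le> d" and j': "j' \<le> d"
    and eq: "\<forall>r<d. skip j (\<sigma> r) = skip j' (\<sigma>' r)"
  shows "j = j'"
proof (rule ccontr)
  assume ne: "j \<noteq> j'"
  define c where "c = (if j' < j then j' else j' - 1)"
  have c1: "c < d" using ne j j' unfolding c_def by auto
  have c2: "skip j c = j'" using ne unfolding c_def skip_def by auto
  have "c \<in> \<sigma> ` {0..<d}" using c1 permutes_image[OF s] by simp
  then obtain r where r: "r < d" "\<sigma> r = c" by auto
  have "skip j' (\<sigma>' r) = skip j (\<sigma> r)" using eq r(1) by simp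
  also have "\<dots> = j'" using r(2) c2 by simp
  finally show False using skip_ne by metis
qed

definition desc :: "nat \<Rightarrow> nat list list \<Rightarrow> nat \<Rightarrow> nat set" where
  "desc N C v = {u. (v, u) \<in> (direct_rel N C)\<^sup>*}"

lemma desc_self: "v \<in> desc N C v" unfolding desc_def by simp

lemma desc_step:
  assumes "k < length C" "a \<in> set (C ! k)"
  shows "desc N C a \<subseteq> desc N C (N + k)"
proof -
  have "(N + k, a) \<in> direct_rel N C" unfolding direct_rel_def using assms by auto
  then show ?thesis unfolding desc_def by (auto intro: converse_rtrancl_into_rtrancl)
qed

lemma sum_single:
  fixes F :: "nat \<Rightarrow> nat"
  assumes "r0 < d" "\<forall>r<d. r \<noteq> r0 \<longrightarrow> F r = 0"
  shows "(\<Sum>r=0..<d. F r) = F r0"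
proof -
  have "(\<Sum>r=0..<d. F r) = F r0 + (\<Sum>r\<in>{0..<d} - {r0}. F r)"
    using assms(1) by (subst sum.remove[of _ r0]) auto
  also have "(\<Sum>r\<in>{0..<d} - {r0}. F r) = 0" using assms(2) by (intro sum.neutral) auto
  finally show ?thesis by simp
qed

context
  fixes d N :: nat and C :: "nat list list" and AA :: "nat \<Rightarrow> nat \<Rightarrow> nat \<Rightarrow> nat" and a :: "nat \<Rightarrow> nat"
  assumes supp: "\<forall>r<d. \<forall>x\<le>d. \<forall>i. AA (a r) x i \<noteq> 0 \<longrightarrow> i \<in> desc N C (a r) \<and> i < N"
    and dig: "\<forall>r<d. \<forall>x\<le>d. \<forall>i. AA (a r) x i \<le> d"
    and disj: "\<forall>r<d. \<forall>r'<d. r \<noteq> r' \<longrightarrow> desc N C (a r) \<inter> desc N C (a r') = {}"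
begin

lemma restr_single:
  assumes f: "\<forall>r<d. f r \<le> d" and r0: "r0 < d" and i: "i \<in> desc N C (a r0)"
  shows "(\<Sum>r=0..<d. AA (a r) (f r) i) = AA (a r0) (f r0) i"
proof (rule sum_single[OF r0], intro allI impI)
  fix r assume "r < d" "r \<noteq> r0"
  then have "i \<notin> desc N C (a r)" using disj r0 i by blast
  then show "AA (a r) (f r) i = 0" using supp f \<open>r < d\<close> by blast
qed

lemma restr_none:
  assumes f: "\<forall>r<d. f r \<le> d" and i: "\<forall>r<d. i \<notin> desc N C (a r)"
  shows "(\<Sum>r=0..<d. AA (a r) (f r) i) = 0"
proof (intro sum.neutral ballI)
  fix r assume "r \<in> {0..<d}"
  then have "r < d" by simp
  then show "AA (a r) (f r) i = 0" using supp f i by blast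
qed

lemma restr_digit:
  assumes f: "\<forall>r<d. f r \<le> d"
  shows "(\<Sum>r=0..<d. AA (a r) (f r) i) \<le> d"
proof (cases "\<exists>r0<d. i \<in> desc N C (a r0)")
  case True
  then obtain r0 where "r0 < d" "i \<in> desc N C (a r0)" by blast
  then show ?thesis using restr_single[OF f] dig f by auto
next
  case False
  then show ?thesis using restr_none[OF f] by auto
qed

lemma restr_supp:
  assumes f: "\<forall>r<d. f r \<le> d" and nz: "(\<Sum>r=0..<d. AA (a r) (f r) i) \<noteq> 0"
  shows "\<exists>r<d. i \<in> desc N C (a r) \<and> i < N"
proof -
  obtain r where "r \<in> {0..<d}" "AA (a r) (f r) i \<noteq> 0"
    using nz by (meson sum.neutral)
  then show ?thesis using supp f by auto
qed

lemma restr_eq: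
  assumes f: "\<forall>r<d. f r \<le> d" and f': "\<forall>r<d. f' r \<le> d"
    and eq: "\<forall>i<N. (\<Sum>r=0..<d. AA (a r) (f r) i) = (\<Sum>r=0..<d. AA (a r) (f' r) i)"
    and r0: "r0 < d"
  shows "AA (a r0) (f r0) = AA (a r0) (f' r0)"
proof
  fix i
  show "AA (a r0) (f r0) i = AA (a r0) (f' r0) i"
  proof (cases "i \<in> desc N C (a r0) \<and> i < N")
    case True
    then show ?thesis using eq restr_single[OF f r0] restr_single[OF f' r0] by auto
  next
    case False
    then have "AA (a r0) (f r0) i = 0" "AA (a r0) (f' r0) i = 0" using supp f f' r0 by blast+
    then show ?thesis by simp
  qed
qed

end

lemma prod_pm1:
  fixes f :: "'b \<Rightarrow> 'a::comm_ring_1"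
  shows "finite S \<Longrightarrow> \<forall>x\<in>S. f x = 1 \<or> f x = -1 \<Longrightarrow> prod f S = 1 \<or> prod f S = -1"
proof (induction S rule: finite_induct)
  case empty then show ?case by simp
next
  case (insert x S)
  then have "prod f S = 1 \<or> prod f S = -1" "f x = 1 \<or> f x = -1" by auto
  then show ?case using insert by auto
qed

lemma sign_pm1: "(of_int (sign \<sigma>) :: 'a::comm_ring_1) = 1 \<or> of_int (sign \<sigma>) = (-1 :: 'a)"
  by (simp add: sign_def)

lemma degree_of_int_mult:
  fixes q :: "complex poly"
  shows "degree (of_int (sign \<sigma>) * q) = degree q" "lead_coeff (of_int (sign \<sigma>) * q) = of_int (sign \<sigma>) * lead_coeff q"
  by (auto simp: sign_def)

definition tt :: "nat \<Rightarrow> (nat \<Rightarrow> nat \<Rightarrow> complex poly) \<Rightarrow> nat \<Rightarrow> (nat \<Rightarrow> nat) \<Rightarrow> complex poly" where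
  "tt d gs j \<sigma> = of_int (sign \<sigma>) * (\<Prod>r=0..<d. gs r (skip j (\<sigma> r)))"

definition Dg :: "nat \<Rightarrow> (nat \<Rightarrow> nat \<Rightarrow> nat \<Rightarrow> nat) \<Rightarrow> (nat \<Rightarrow> nat) \<Rightarrow> nat \<Rightarrow> (nat \<Rightarrow> nat) \<Rightarrow> nat \<Rightarrow> nat" where
  "Dg d AA a j \<sigma> i = (\<Sum>r=0..<d. AA (a r) (skip j (\<sigma> r)) i)"

context
  fixes d N :: nat and C :: "nat list list" and AA :: "nat \<Rightarrow> nat \<Rightarrow> nat \<Rightarrow> nat" and a :: "nat \<Rightarrow> nat"
    and gs :: "nat \<Rightarrow> nat \<Rightarrow> complex poly"
  assumes supp: "\<forall>r<d. \<forall>x\<le>d. \<forall>i. AA (a r) x i \<noteq> 0 \<longrightarrow> i \<in> desc N C (a r) \<and> i < N"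
    and dig: "\<forall>r<d. \<forall>x\<le>d. \<forall>i. AA (a r) x i \<le> d"
    and disj: "\<forall>r<d. \<forall>r'<d. r \<noteq> r' \<longrightarrow> desc N C (a r) \<inter> desc N C (a r') = {}"
    and inj: "\<forall>r<d. \<forall>x\<le>d. \<forall>x'\<le>d. AA (a r) x = AA (a r) x' \<longrightarrow> x = x'"
    and ch: "\<forall>r<d. \<forall>x\<le>d. (lead_coeff (gs r x) = 1 \<or> lead_coeff (gs r x) = -1) \<and>
               degree (gs r x) = (\<Sum>i<N. AA (a r) x i * Suc d ^ i)"
begin

lemma cols_le: "\<sigma> permutes {0..<d} \<Longrightarrow> j \<le> d \<Longrightarrow> \<forall>r<d. skip j (\<sigma> r) \<le> d"
proof (intro allI impI)
  fix r assume s: "\<sigma> permutes {0..<d}" and j: "j \<le> d" and r: "r < d"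
  have "\<sigma> r \<in> {0..<d}" using permutes_in_image[OF s] r by simp
  then show "skip j (\<sigma> r) \<le> d" using skip_le j by simp
qed

lemma tt_props:
  assumes s: "\<sigma> permutes {0..<d}" and j: "j \<le> d"
  shows "(lead_coeff (tt d gs j \<sigma>) = 1 \<or> lead_coeff (tt d gs j \<sigma>) = -1) \<and>
         degree (tt d gs j \<sigma>) = (\<Sum>i<N. Dg d AA a j \<sigma> i * Suc d ^ i)"
proof -
  note cl = cols_le[OF s j]
  have fac: "\<forall>r\<in>{0..<d}. (lead_coeff (gs r (skip j (\<sigma> r))) = 1 \<or> lead_coeff (gs r (skip j (\<sigma> r))) = -1) \<and>
               degree (gs r (skip j (\<sigma> r))) = (\<Sum>i<N. AA (a r) (skip j (\<sigma> r)) i * Suc d ^ i)"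
  proof (intro ballI)
    fix r assume "r \<in> {0..<d}"
    then have r: "r < d" by simp
    show "(lead_coeff (gs r (skip j (\<sigma> r))) = 1 \<or> lead_coeff (gs r (skip j (\<sigma> r))) = -1) \<and>
               degree (gs r (skip j (\<sigma> r))) = (\<Sum>i<N. AA (a r) (skip j (\<sigma> r)) i * Suc d ^ i)"
      using ch cl r by blast
  qed
  have nz: "\<forall>r\<in>{0..<d}. gs r (skip j (\<sigma> r)) \<noteq> 0" using fac by auto
  have lp: "lead_coeff (\<Prod>r=0..<d. gs r (skip j (\<sigma> r))) = 1 \<or> lead_coeff (\<Prod>r=0..<d. gs r (skip j (\<sigma> r))) = -1"
    unfolding lead_coeff_prod by (rule prod_pm1) (use fac in auto)
  have "degree (\<Prod>r=0..<d. gs r (skip j (\<sigma> r))) = (\<Sum>r=0..<d. degree (gs r (skip j (\<sigma> r))))"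
    by (rule degree_prod_eq_sum_degree) (use nz in auto)
  also have "\<dots> = (\<Sum>r=0..<d. \<Sum>i<N. AA (a r) (skip j (\<sigma> r)) i * Suc d ^ i)"
    using fac by (intro sum.cong) auto
  also have "\<dots> = (\<Sum>i<N. Dg d AA a j \<sigma> i * Suc d ^ i)"
    unfolding Dg_def sum_distrib_right by (rule sum.swap)
  finally have dp: "degree (\<Prod>r=0..<d. gs r (skip j (\<sigma> r))) = (\<Sum>i<N. Dg d AA a j \<sigma> i * Suc d ^ i)" .
  have l: "lead_coeff (tt d gs j \<sigma>) = (of_int (sign \<sigma>)::complex) * lead_coeff (\<Prod>r=0..<d. gs r (skip j (\<sigma> r)))"
    unfolding tt_def by (rule degree_of_int_mult(2))
  have dg: "degree (tt d gs j \<sigma>) = degree (\<Prod>r=0..<d. gs r (skip j (\<sigma> r)))"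
    unfolding tt_def by (rule degree_of_int_mult(1))
  have "(of_int (sign \<sigma>)::complex) = 1 \<or> (of_int (sign \<sigma>)::complex) = -1" by (rule sign_pm1)
  then show ?thesis using l dg lp dp by auto
qed

lemma Dg_digit: "\<sigma> permutes {0..<d} \<Longrightarrow> j \<le> d \<Longrightarrow> Dg d AA a j \<sigma> i < Suc d"
  unfolding Dg_def using restr_digit[OF supp dig disj cols_le] by (simp add: le_imp_less_Suc)

lemma Dg_eq_cols:
  assumes s: "\<sigma> permutes {0..<d}" and s': "\<sigma>' permutes {0..<d}" and j: "j \<le> d" and j': "j' \<le> d"
    and eq: "\<forall>i<N. Dg d AA a j \<sigma> i = Dg d AA a j' \<sigma>' i"
  shows "\<forall>r<d. skip j (\<sigma> r) = skip j' (\<sigma>' r)"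
proof (intro allI impI)
  fix r assume r: "r < d"
  have "AA (a r) (skip j (\<sigma> r)) = AA (a r) (skip j' (\<sigma>' r))"
    by (rule restr_eq[OF supp dig disj cols_le[OF s j] cols_le[OF s' j'] _ r]) (use eq in \<open>simp add: Dg_def\<close>)
  then show "skip j (\<sigma> r) = skip j' (\<sigma>' r)" using inj r cols_le[OF s j] cols_le[OF s' j'] by blast
qed

lemma unique_max:
  assumes s: "\<sigma> permutes {0..<d}" and s': "\<sigma>' permutes {0..<d}" and j: "j \<le> d"
    and eq: "degree (tt d gs j \<sigma>) = degree (tt d gs j \<sigma>')"
  shows "\<sigma> = \<sigma>'"
proof -
  have "(\<Sum>i<N. Dg d AA a j \<sigma> i * Suc d ^ i) = (\<Sum>i<N. Dg d AA a j \<sigma>' i * Suc d ^ i)"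
    using eq tt_props[OF s j] tt_props[OF s' j] by simp
  then have "\<forall>i<N. Dg d AA a j \<sigma> i = Dg d AA a j \<sigma>' i"
    by (intro digits_unique) (use Dg_digit[OF s j] Dg_digit[OF s' j] in auto)
  then have cols: "\<forall>r<d. skip j (\<sigma> r) = skip j (\<sigma>' r)" by (rule Dg_eq_cols[OF s s' j j])
  show "\<sigma> = \<sigma>'"
  proof
    fix r
    show "\<sigma> r = \<sigma>' r"
    proof (cases "r < d")
      case True then show ?thesis using cols skip_inj by blast
    next
      case False
      then have "r \<notin> {0..<d}" by simp
      then show ?thesis using permutes_not_in[OF s] permutes_not_in[OF s'] by metis
    qed
  qed
qed

lemma step_poly:
  assumes Os: "Os \<subseteq> {\<sigma>. \<sigma> permutes {0..<d}}" "finite Os" "Os \<noteq> {}" and j: "j \<le> d"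
    and eps: "eps = (1::complex poly) \<or> eps = -1"
  shows "\<exists>\<sigma>\<in>Os. (lead_coeff (eps * (\<Sum>\<tau>\<in>Os. tt d gs j \<tau>)) = 1 \<or> lead_coeff (eps * (\<Sum>\<tau>\<in>Os. tt d gs j \<tau>)) = -1) \<and>
                degree (eps * (\<Sum>\<tau>\<in>Os. tt d gs j \<tau>)) = (\<Sum>i<N. Dg d AA a j \<sigma> i * Suc d ^ i)"
proof -
  have "Max ((\<lambda>\<tau>. degree (tt d gs j \<tau>)) ` Os) \<in> (\<lambda>\<tau>. degree (tt d gs j \<tau>)) ` Os"
    using Os by (intro Max_in) auto
  then obtain \<sigma> where \<sigma>: "\<sigma> \<in> Os" "degree (tt d gs j \<sigma>) = Max ((\<lambda>\<tau>. degree (tt d gs j \<tau>)) ` Os)" by auto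
  have s: "\<sigma> permutes {0..<d}" using Os \<sigma> by auto
  define D where "D = degree (tt d gs j \<sigma>)"
  have lt: "degree (tt d gs j \<tau>) < D" if "\<tau> \<in> Os - {\<sigma>}" for \<tau>
  proof -
    have t: "\<tau> permutes {0..<d}" "\<tau> \<noteq> \<sigma>" using that Os by auto
    have "degree (tt d gs j \<tau>) \<le> D" unfolding D_def \<sigma>(2) using Os that by (intro Max_ge) auto
    moreover have "degree (tt d gs j \<tau>) \<noteq> D" using unique_max[OF t(1) s j] t(2) unfolding D_def by blast
    ultimately show ?thesis by simp
  qed
  define rest where "rest = (\<Sum>\<tau>\<in>Os - {\<sigma>}. tt d gs j \<tau>)"
  have sum_eq: "(\<Sum>\<tau>\<in>Os. tt d gs j \<tau>) = tt d gs j \<sigma> + rest"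
    unfolding rest_def using Os(2) \<sigma>(1) by (simp add: sum.remove)
  have crest: "coeff rest n = 0" if "D \<le> n" for n
    unfolding rest_def coeff_sum
  proof (intro sum.neutral ballI)
    fix \<tau> assume "\<tau> \<in> Os - {\<sigma>}"
    then have "degree (tt d gs j \<tau>) < n" using lt that by fastforce
    then show "coeff (tt d gs j \<tau>) n = 0" by (rule coeff_eq_0)
  qed
  have tp: "(lead_coeff (tt d gs j \<sigma>) = 1 \<or> lead_coeff (tt d gs j \<sigma>) = -1) \<and> degree (tt d gs j \<sigma>) = (\<Sum>i<N. Dg d AA a j \<sigma> i * Suc d ^ i)"
    using tt_props[OF s j] .
  define q where "q = eps * (tt d gs j \<sigma> + rest)"
  have cq: "coeff q n = (if eps = 1 then 1 else -1) * (coeff (tt d gs j \<sigma>) n + coeff rest n)" for n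
    unfolding q_def using eps by auto
  have cD: "coeff q D = (if eps = 1 then 1 else -1) * lead_coeff (tt d gs j \<sigma>)"
    using cq[of D] crest[of D] unfolding D_def by simp
  have cgt: "coeff q n = 0" if "D < n" for n
    using cq[of n] crest[of n] that coeff_eq_0[of "tt d gs j \<sigma>" n] unfolding D_def by simp
  have lnz: "lead_coeff (tt d gs j \<sigma>) \<noteq> 0" using tp by auto
  have "coeff q D \<noteq> 0" using cD lnz by simp
  then have dq: "degree q = D" using cgt by (meson degree_le le_antisym le_degree)
  have "lead_coeff q = 1 \<or> lead_coeff q = -1" using dq cD tp by auto
  then show ?thesis unfolding sum_eq
    by (intro bexI[OF _ \<sigma>(1)]) (use dq tp in \<open>simp add: q_def D_def\<close>)
qed

end

definition good :: "nat \<Rightarrow> nat \<Rightarrow> nat list list \<Rightarrow> (nat \<Rightarrow> nat \<Rightarrow> real) \<Rightarrow> nat \<Rightarrow> (nat \<Rightarrow> nat \<Rightarrow> nat) \<Rightarrow> bool" where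
  "good d N C p e A \<longleftrightarrow>
     (\<forall>j\<le>d. (lead_coeff ((evalG d N C p (Xp d) ! e) j) = 1 \<or> lead_coeff ((evalG d N C p (Xp d) ! e) j) = -1) \<and>
            degree ((evalG d N C p (Xp d) ! e) j) = (\<Sum>i<N. A j i * Suc d ^ i)) \<and>
     (\<forall>j\<le>d. \<forall>i. A j i \<noteq> 0 \<longrightarrow> i \<in> desc N C e \<and> i < N) \<and>
     (\<forall>j\<le>d. \<forall>i. A j i \<le> d) \<and>
     (\<forall>j\<le>d. \<forall>j'\<le>d. A j = A j' \<longrightarrow> j = j')"

lemma good_input:
  assumes e: "e < N"
  shows "good d N C p e (\<lambda>j i. if i = e then j else 0)"
proof -
  have g: "(evalG d N C p (Xp d) ! e) j = monom 1 (j * Suc d ^ e)" if "j \<le> d" for j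
    using e that by (simp add: evalG_in Xp_def)
  have s: "(\<Sum>i<N. (if i = e then j else 0) * Suc d ^ i) = j * Suc d ^ e" for j
  proof -
    have "(\<Sum>i<N. (if i = e then j else 0) * Suc d ^ i) = (\<Sum>i<N. if i = e then j * Suc d ^ e else 0)"
      by (intro sum.cong) auto
    also have "\<dots> = j * Suc d ^ e" using e by (simp add: sum.delta')
    finally show ?thesis .
  qed
  show ?thesis unfolding good_def
  proof (intro conjI allI impI)
    fix j assume j: "j \<le> d"
    show "lead_coeff ((evalG d N C p (Xp d) ! e) j) = 1 \<or> lead_coeff ((evalG d N C p (Xp d) ! e) j) = -1"
      unfolding g[OF j] lead_coeff_monom by simp
    show "degree ((evalG d N C p (Xp d) ! e) j) = (\<Sum>i<N. (if i = e then j else 0) * Suc d ^ i)"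
      unfolding s g[OF j] by (subst degree_monom_eq) simp_all
  next
    fix j i assume "j \<le> d" "(if i = e then j else 0) \<noteq> 0"
    then show "i \<in> desc N C e" "i < N" using e desc_self by (auto split: if_splits)
  next
    fix j i assume "j \<le> d"
    then show "(if i = e then j else 0) \<le> d" by simp
  next
    fix j j' assume "j \<le> d" "j' \<le> d" "(\<lambda>i. if i = e then j else 0) = (\<lambda>i. if i = e then j' else 0)"
    then show "j = j'" using fun_cong[of _ _ e] by fastforce
  qed
qed

lemma deg_claim:
  assumes wf: "wf_construction d N C kind"
    and disjC: "\<forall>k<length C. \<forall>r<d. \<forall>r'<d. r \<noteq> r' \<longrightarrow> desc N C (C ! k ! r) \<inter> desc N C (C ! k ! r') = {}"
  shows "e < N + length C \<Longrightarrow> \<exists>A. good d N C p e A"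
proof (induction e rule: less_induct)
  case (less e)
  show ?case
  proof (cases "e < N")
    case True
    then show ?thesis using good_input by blast
  next
    case False
    then obtain k where k: "e = N + k" "k < length C" using less.prems by (metis add_diff_inverse_nat add_less_cancel_left)
    let ?args = "C ! k"
    let ?a = "\<lambda>r. C ! k ! r"
    have args: "length ?args = d" "\<forall>a\<in>set ?args. a < N + k" using wf_args[OF wf k(2)] by auto
    have "\<forall>a\<in>set ?args. \<exists>A. good d N C p a A" using less.IH args k by auto
    then obtain AA where AA: "\<forall>a\<in>set ?args. good d N C p a (AA a)" using bchoice by blast
    have ar: "\<And>r. r < d \<Longrightarrow> ?a r \<in> set ?args" using args by auto
    have gr: "\<And>r. r < d \<Longrightarrow> good d N C p (?a r) (AA (?a r))" using AA ar by blast
    let ?gs = "\<lambda>r x. (evalG d N C p (Xp d) ! (?a r)) x"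
    have supp: "\<forall>r<d. \<forall>x\<le>d. \<forall>i. AA (?a r) x i \<noteq> 0 \<longrightarrow> i \<in> desc N C (?a r) \<and> i < N"
      using gr unfolding good_def by blast
    have dig: "\<forall>r<d. \<forall>x\<le>d. \<forall>i. AA (?a r) x i \<le> d" using gr unfolding good_def by blast
    have disj: "\<forall>r<d. \<forall>r'<d. r \<noteq> r' \<longrightarrow> desc N C (?a r) \<inter> desc N C (?a r') = {}"
      using disjC k(2) by blast
    have inj: "\<forall>r<d. \<forall>x\<le>d. \<forall>x'\<le>d. AA (?a r) x = AA (?a r) x' \<longrightarrow> x = x'"
      using gr unfolding good_def by blast
    have ch: "\<forall>r<d. \<forall>x\<le>d. (lead_coeff (?gs r x) = 1 \<or> lead_coeff (?gs r x) = -1) \<and>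
               degree (?gs r x) = (\<Sum>i<N. AA (?a r) x i * Suc d ^ i)"
      using gr unfolding good_def by blast
    note SP = step_poly[OF supp dig disj inj ch]
    let ?Tt = "\<lambda>j. \<lambda>r c. (map (\<lambda>a. evalT d N C p ! a) ?args ! r) (skip j c)"
    have gform: "(evalG d N C p (Xp d) ! e) j = (if even j then 1 else -1) * (\<Sum>\<sigma>\<in>opt d (?Tt j). tt d ?gs j \<sigma>)"
      if j: "j \<le> d" for j
    proof -
      have "(evalG d N C p (Xp d) ! e) j = (if even j then 1 else -1) *
          (\<Sum>\<sigma>\<in>opt d (?Tt j). of_int (sign \<sigma>) * (\<Prod>r=0..<d. (map (\<lambda>a. evalG d N C p (Xp d) ! a) ?args ! r) (skip j (\<sigma> r))))"
        using evalG_step[OF wf k(2), where p=p and X="Xp d"] j k(1) by (simp add: cramerG_def)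
      also have "\<dots> = (if even j then 1 else -1) * (\<Sum>\<sigma>\<in>opt d (?Tt j). tt d ?gs j \<sigma>)"
        using args(1) by (intro arg_cong2[where f="(*)"] sum.cong) (auto simp: tt_def intro!: arg_cong2[where f="(*)"] prod.cong)
      finally show ?thesis .
    qed
    have optP: "opt d (?Tt j) \<subseteq> {\<sigma>. \<sigma> permutes {0..<d}}" "finite (opt d (?Tt j))" "opt d (?Tt j) \<noteq> {}" for j
      using opt_fin opt_ne unfolding opt_def by auto
    have "\<forall>j. \<exists>\<sigma>. j \<le> d \<longrightarrow> \<sigma> \<in> opt d (?Tt j) \<and> (lead_coeff ((evalG d N C p (Xp d) ! e) j) = 1 \<or> lead_coeff ((evalG d N C p (Xp d) ! e) j) = -1) \<and>
                degree ((evalG d N C p (Xp d) ! e) j) = (\<Sum>i<N. Dg d AA ?a j \<sigma> i * Suc d ^ i)"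
    proof
      fix j
      show "\<exists>\<sigma>. j \<le> d \<longrightarrow> \<sigma> \<in> opt d (?Tt j) \<and> (lead_coeff ((evalG d N C p (Xp d) ! e) j) = 1 \<or> lead_coeff ((evalG d N C p (Xp d) ! e) j) = -1) \<and>
                degree ((evalG d N C p (Xp d) ! e) j) = (\<Sum>i<N. Dg d AA ?a j \<sigma> i * Suc d ^ i)"
      proof (cases "j \<le> d")
        case True
        have "\<exists>\<sigma>\<in>opt d (?Tt j). (lead_coeff ((evalG d N C p (Xp d) ! e) j) = 1 \<or> lead_coeff ((evalG d N C p (Xp d) ! e) j) = -1) \<and>
                degree ((evalG d N C p (Xp d) ! e) j) = (\<Sum>i<N. Dg d AA ?a j \<sigma> i * Suc d ^ i)"
          unfolding gform[OF True] by (rule SP[OF optP True]) simp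
        then show ?thesis by blast
      qed simp
    qed
    note ex = this
    obtain S where S: "\<forall>j. j \<le> d \<longrightarrow> S j \<in> opt d (?Tt j) \<and>
        (lead_coeff ((evalG d N C p (Xp d) ! e) j) = 1 \<or> lead_coeff ((evalG d N C p (Xp d) ! e) j) = -1) \<and>
         degree ((evalG d N C p (Xp d) ! e) j) = (\<Sum>i<N. Dg d AA ?a j (S j) i * Suc d ^ i)"
      using choice[OF ex] by blast
    have Sp: "S j permutes {0..<d}" if "j \<le> d" for j using S that optP(1) by blast
    show ?thesis
    proof (rule exI[of _ "\<lambda>j. Dg d AA ?a j (S j)"], unfold good_def, intro conjI allI impI)
      fix j assume j: "j \<le> d"
      show "lead_coeff ((evalG d N C p (Xp d) ! e) j) = 1 \<or> lead_coeff ((evalG d N C p (Xp d) ! e) j) = -1"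
        using S j by blast
      show "degree ((evalG d N C p (Xp d) ! e) j) = (\<Sum>i<N. Dg d AA ?a j (S j) i * Suc d ^ i)"
        using S j by blast
    next
      fix j i assume j: "j \<le> d" and nz: "Dg d AA ?a j (S j) i \<noteq> 0"
      obtain r where r: "r < d" "i \<in> desc N C (?a r)" "i < N"
        using restr_supp[OF supp dig disj cols_le[OF supp dig disj inj ch Sp[OF j] j]] nz unfolding Dg_def by blast
      show "i < N" by (fact r(3))
      show "i \<in> desc N C e" using desc_step[OF k(2) ar[OF r(1)]] r(2) k(1) by blast
    next
      fix j i assume j: "j \<le> d"
      show "Dg d AA ?a j (S j) i \<le> d"
        using restr_digit[OF supp dig disj cols_le[OF supp dig disj inj ch Sp[OF j] j]] unfolding Dg_def by blast
    next
      fix j j' assume j: "j \<le> d" and j': "j' \<le> d" and eq: "Dg d AA ?a j (S j) = Dg d AA ?a j' (S j')"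
      have "\<forall>r<d. skip j (S j r) = skip j' (S j' r)"
        by (rule Dg_eq_cols[OF supp dig disj inj ch Sp[OF j] Sp[OF j'] j j']) (use eq in simp)
      then show "j = j'" by (rule cols_determine[OF Sp[OF j] j j'])
    qed
  qed
qed

context
  fixes d N :: nat and C :: "nat list list" and kind :: "nat \<Rightarrow> bool"
  assumes wf: "wf_construction d N C kind"
begin

lemma rel_lt: "(a, b) \<in> direct_rel N C \<Longrightarrow> b < a"
proof -
  assume ab: "(a, b) \<in> direct_rel N C"
  then have "N \<le> a" "a < N + length C" "b \<in> set (C ! (a - N))" unfolding direct_rel_def by auto
  moreover have "a - N < length C" using \<open>N \<le> a\<close> \<open>a < N + length C\<close> by simp
  ultimately have "b < N + (a - N)" using wf unfolding wf_construction_def by blast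
  then show "b < a" using \<open>N \<le> a\<close> by simp
qed

lemma desc_le: "u \<in> desc N C v \<Longrightarrow> u \<le> v"
  unfolding desc_def mem_Collect_eq
proof (induction rule: rtrancl_induct)
  case base then show ?case by simp
next
  case (step y z) then show ?case using rel_lt by fastforce
qed

lemma desc_trans: "u \<in> desc N C v \<Longrightarrow> desc N C u \<subseteq> desc N C v"
  unfolding desc_def by auto

definition adj :: "nat \<Rightarrow> nat \<Rightarrow> bool" where
  "adj x y \<longleftrightarrow> (x, y) \<in> direct_rel N C \<or> (y, x) \<in> direct_rel N C"

lemma chain:
  assumes "(w, u) \<in> (direct_rel N C)\<^sup>*"
  shows "\<exists>xs. xs \<noteq> [] \<and> hd xs = w \<and> last xs = u \<and> distinct xs \<and> successively adj xs \<and> set xs \<subseteq> desc N C w"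
  using assms
proof (induction rule: converse_rtrancl_induct)
  case base
  then show ?case by (intro exI[of _ "[u]"]) (auto simp: desc_self)
next
  case (step w w')
  then obtain xs where xs: "xs \<noteq> []" "hd xs = w'" "last xs = u" "distinct xs" "successively adj xs" "set xs \<subseteq> desc N C w'"
    by blast
  have ww: "w' < w" using rel_lt step(1) by blast
  have sub: "desc N C w' \<subseteq> desc N C w" using step(1) unfolding desc_def by (auto intro: converse_rtrancl_into_rtrancl)
  have notin: "w \<notin> set xs" using xs(6) desc_le ww by fastforce
  show ?case
  proof (intro exI[of _ "w # xs"] conjI)
    show "successively adj (w # xs)" using xs step(1) by (cases xs) (auto simp: adj_def)
    show "set (w # xs) \<subseteq> desc N C w" using xs(6) sub desc_self by auto
  qed (use xs notin in auto)
qed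

lemma upath:
  shows "(u, z) \<in> (direct_rel N C)\<^sup>* \<Longrightarrow> (w, z) \<in> (direct_rel N C)\<^sup>* \<Longrightarrow> u \<noteq> w \<Longrightarrow>
    \<exists>xs. xs \<noteq> [] \<and> hd xs = u \<and> last xs = w \<and> distinct xs \<and> successively adj xs \<and> set xs \<subseteq> desc N C u \<union> desc N C w"
proof (induction "u + w" arbitrary: u w rule: less_induct)
  case less
  show ?case
  proof (cases "w \<in> desc N C u")
    case True
    then show ?thesis using chain[of u w] unfolding desc_def by blast
  next
    case False
    note nw = False
    show ?thesis
    proof (cases "u \<in> desc N C w")
      case True
      then obtain xs where xs: "xs \<noteq> []" "hd xs = w" "last xs = u" "distinct xs" "successively adj xs" "set xs \<subseteq> desc N C w"
        using chain[of w u] unfolding desc_def by blast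
      have sym: "(\<lambda>x y. adj y x) = adj" unfolding adj_def by auto
      have sr: "successively adj (rev xs)" unfolding successively_rev sym by (fact xs(5))
      show ?thesis
        by (intro exI[of _ "rev xs"] conjI) (use xs sr in \<open>auto simp: hd_rev last_rev\<close>)
    next
      case False
      have uz: "u \<noteq> z" using False less.prems(2) unfolding desc_def by auto
      then obtain u' where u': "(u, u') \<in> direct_rel N C" "(u', z) \<in> (direct_rel N C)\<^sup>*"
        using less.prems(1) by (metis converse_rtranclE)
      have lt: "u' < u" using rel_lt u'(1) by blast
      have uw: "u' \<noteq> w" using nw u'(1) unfolding desc_def by auto
      obtain ys where ys: "ys \<noteq> []" "hd ys = u'" "last ys = w" "distinct ys" "successively adj ys" "set ys \<subseteq> desc N C u' \<union> desc N C w"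
        using less.hyps[of u' w] lt u'(2) less.prems(2) uw by auto
      have notin: "u \<notin> set ys" using ys(6) False desc_le lt by fastforce
      have sub: "desc N C u' \<subseteq> desc N C u" using u'(1) unfolding desc_def by (auto intro: converse_rtrancl_into_rtrancl)
      show ?thesis
      proof (intro exI[of _ "u # ys"] conjI)
        show "successively adj (u # ys)" using ys u'(1) by (cases ys) (auto simp: adj_def)
        show "set (u # ys) \<subseteq> desc N C u \<union> desc N C w" using ys(6) sub desc_self by auto
      qed (use ys notin in auto)
    qed
  qed
qed

lemma cycle_edges:
  assumes xs: "xs \<noteq> []" "successively adj xs" "set xs \<subseteq> V" and K: "K \<in> V"
    and h: "(K, hd xs) \<in> direct_rel N C" and l: "(K, last xs) \<in> direct_rel N C"
  shows "\<forall>i<length (K # xs). {(K # xs) ! i, (K # xs) ! ((i + 1) mod length (K # xs))} \<in>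
           {{a, b} | a b. a \<in> V \<and> (a, b) \<in> direct_rel N C}"
proof (intro allI impI)
  fix i assume i: "i < length (K # xs)"
  let ?E = "{{a, b} | a b. a \<in> V \<and> (a, b) \<in> direct_rel N C}"
  have lx: "length xs \<ge> 1" using xs(1) by (cases xs) auto
  consider "i = 0" | "0 < i \<and> i < length xs" | "i = length xs" using i by force
  then show "{(K # xs) ! i, (K # xs) ! ((i + 1) mod length (K # xs))} \<in> ?E"
  proof cases
    case 1
    have "(1::nat) mod length (K # xs) = 1" using xs(1) by (cases xs) auto
    moreover have "(K # xs) ! 1 = hd xs" using xs(1) by (cases xs) auto
    ultimately show ?thesis using 1 K h by auto
  next
    case 2
    then have m: "(i + 1) mod length (K # xs) = i + 1" by simp
    have nth1: "(K # xs) ! i = xs ! (i - 1)" "(K # xs) ! (i + 1) = xs ! i" using 2 by (cases i, auto)+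
    have "Suc (i - 1) < length xs" using 2 by simp
    then have "adj (xs ! (i - 1)) (xs ! Suc (i - 1))" using xs(2) unfolding successively_conv_nth by blast
    then have a: "adj (xs ! (i - 1)) (xs ! i)" using 2 by simp
    have inV: "xs ! (i - 1) \<in> V" "xs ! i \<in> V" using xs(3) 2 by auto
    show ?thesis unfolding m nth1
    proof (cases "(xs ! (i - 1), xs ! i) \<in> direct_rel N C")
      case True then show "{xs ! (i - 1), xs ! i} \<in> ?E" using inV by blast
    next
      case False
      then have "(xs ! i, xs ! (i - 1)) \<in> direct_rel N C" using a unfolding adj_def by blast
      then have "{xs ! i, xs ! (i - 1)} \<in> ?E" using inV by blast
      then show "{xs ! (i - 1), xs ! i} \<in> ?E" by (simp add: insert_commute)
    qed
  next
    case 3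
    then have m: "(i + 1) mod length (K # xs) = 0" by simp
    have "(K # xs) ! i = last xs" using 3 xs(1) lx by (cases i) (auto simp: last_conv_nth)
    then have "{(K # xs) ! i, (K # xs) ! 0} = {K, last xs}" by (simp add: insert_commute)
    then show ?thesis unfolding m using K l by auto
  qed
qed

lemma tree_disjoint:
  assumes k: "k < length C" and tree: "trop_admissible N C (N + k)"
    and r: "r < d" and r': "r' < d" and ne: "C ! k ! r \<noteq> C ! k ! r'"
  shows "desc N C (C ! k ! r) \<inter> desc N C (C ! k ! r') = {}"
proof (rule ccontr)
  let ?u = "C ! k ! r" and ?w = "C ! k ! r'" and ?K = "N + k"
  assume "desc N C ?u \<inter> desc N C ?w \<noteq> {}"
  then obtain z where z: "(?u, z) \<in> (direct_rel N C)\<^sup>*" "(?w, z) \<in> (direct_rel N C)\<^sup>*" unfolding desc_def by auto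
  obtain xs where xs: "xs \<noteq> []" "hd xs = ?u" "last xs = ?w" "distinct xs" "successively adj xs"
    "set xs \<subseteq> desc N C ?u \<union> desc N C ?w"
    using upath[OF z ne] by blast
  have len: "length (C ! k) = d" and lt: "\<forall>a\<in>set (C ! k). a < N + k" using wf_args[OF wf k] by auto
  have uin: "?u \<in> set (C ! k)" "?w \<in> set (C ! k)" using len r r' by auto
  have Ku: "(?K, ?u) \<in> direct_rel N C" "(?K, ?w) \<in> direct_rel N C"
    unfolding direct_rel_def using k uin by auto
  let ?V = "cg_vertices N C ?K"
  have Vd: "?V = desc N C ?K" unfolding cg_vertices_def desc_def by simp
  have subV: "set xs \<subseteq> ?V" using xs(6) desc_step[OF k uin(1)] desc_step[OF k uin(2)] Vd by blast
  have KV: "?K \<in> ?V" using desc_self Vd by blast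
  have Knot: "?K \<notin> set xs"
  proof
    assume "?K \<in> set xs"
    then have "?K \<le> ?u \<or> ?K \<le> ?w" using xs(6) desc_le by blast
    then show False using lt uin by force
  qed
  have l2: "length xs \<ge> 2"
  proof (rule ccontr)
    assume "\<not> length xs \<ge> 2"
    then obtain x where "xs = [x]" using xs(1) by (cases xs) (auto simp: Suc_le_eq)
    then show False using xs(2,3) ne by simp
  qed
  have E: "\<forall>i<length (?K # xs). {(?K # xs) ! i, (?K # xs) ! ((i + 1) mod length (?K # xs))} \<in> cg_edges N C ?K"
    using cycle_edges[OF xs(1) xs(5) subV KV] Ku xs(2,3) unfolding cg_edges_def by simp
  have "\<exists>vs. length vs \<ge> 3 \<and> distinct vs \<and> set vs \<subseteq> ?V \<and>
            (\<forall>i<length vs. {vs ! i, vs ! ((i + 1) mod length vs)} \<in> cg_edges N C ?K)"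
    by (rule exI[of _ "?K # xs"]) (use l2 xs(4) Knot subV KV E in auto)
  then show False using tree unfolding trop_admissible_def is_tree_def by blast
qed

end

lemma evalK_puis:
  assumes wf: "wf_construction d N C kind" and P: "\<forall>i<N. proj_pointK d (P i)"
  shows "e < N + length C \<Longrightarrow> \<forall>j\<le>d. is_puiseux ((evalK d N C P ! e) j)"
proof (induction e rule: less_induct)
  case (less e)
  show ?case
  proof (cases "e < N")
    case True
    then show ?thesis using P by (simp add: evalK_in proj_pointK_def)
  next
    case False
    then obtain k where k: "e = N + k" "k < length C" using less.prems by (metis add_diff_inverse_nat add_less_cancel_left)
    have args: "length (C ! k) = d" "\<forall>a\<in>set (C ! k). a < N + k" using wf_args[OF wf k(2)] by auto
    show ?thesis
    proof (intro allI impI)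
      fix j assume j: "j \<le> d"
      let ?Mk = "\<lambda>r c. (map (\<lambda>a. evalK d N C P ! a) (C ! k) ! r) (skip j c)"
      have E: "\<forall>r<d. \<forall>c<d. is_puiseux (?Mk r c)"
      proof (intro allI impI)
        fix r c assume r: "r < d" and c: "c < d"
        have "C ! k ! r \<in> set (C ! k)" using args r by auto
        then have "C ! k ! r < e" using args k by auto
        then show "is_puiseux (?Mk r c)" using less.IH[of "C ! k ! r"] less.prems skip_le[OF c j] args r by auto
      qed
      have dk: "detK d ?Mk = Rep_puis (det (matK d ?Mk))" using E by (intro detK_det) auto
      have eK: "(evalK d N C P ! e) j = (if even j then id else sneg) (detK d ?Mk)"
        using evalK_step[OF wf k(2)] j k(1) by (simp add: cramerK_def)
      show "is_puiseux ((evalK d N C P ! e) j)" using eK dk Rep_puis_ok puis_neg by auto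
    qed
  qed
qed

lemma children_distinct:
  assumes wf: "wf_construction d N C kind"
    and performable: "\<exists>P. (\<forall>i<N. proj_pointK d (P i)) \<and> meaningful d N C P"
  shows "\<forall>k<length C. \<forall>r<d. \<forall>r'<d. r \<noteq> r' \<longrightarrow> C ! k ! r \<noteq> C ! k ! r'"
proof (intro allI impI notI)
  fix k r r' assume k: "k < length C" and r: "r < d" and r': "r' < d" and ne: "r \<noteq> r'"
    and eq: "C ! k ! r = C ! k ! r'"
  obtain P where P: "\<forall>i<N. proj_pointK d (P i)" "meaningful d N C P" using performable by blast
  have args: "length (C ! k) = d" "\<forall>a\<in>set (C ! k). a < N + k" using wf_args[OF wf k] by auto
  have zero: "(evalK d N C P ! (N + k)) j = szero" if j: "j \<le> d" for j
  proof -
    let ?Mk = "\<lambda>r c. (map (\<lambda>a. evalK d N C P ! a) (C ! k) ! r) (skip j c)"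
    have E: "\<forall>r<d. \<forall>c<d. is_puiseux (?Mk r c)"
    proof (intro allI impI)
      fix r c assume r: "r < d" and c: "c < d"
      have "C ! k ! r \<in> set (C ! k)" using args r by auto
      then have "C ! k ! r < N + length C" using args k by auto
      then show "is_puiseux (?Mk r c)" using evalK_puis[OF wf P(1)] skip_le[OF c j] args r by auto
    qed
    have dk: "detK d ?Mk = Rep_puis (det (matK d ?Mk))" using E by (intro detK_det) auto
    have A: "matK d ?Mk \<in> carrier_mat d d" unfolding matK_def by auto
    have rows: "row (matK d ?Mk) r = row (matK d ?Mk) r'"
      unfolding matK_def using r r' eq args by (auto intro!: eq_vecI)
    have "det (matK d ?Mk) = 0" by (rule det_identical_rows[OF A ne r r' rows])
    then have "detK d ?Mk = szero" using dk by (simp add: Rep_puis_zero)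
    moreover have "(evalK d N C P ! (N + k)) j = (if even j then id else sneg) (detK d ?Mk)"
      using evalK_step[OF wf k] j by (simp add: cramerK_def)
    ultimately show ?thesis by (simp add: sneg_def szero_def)
  qed
  then show False using P(2) k unfolding meaningful_def by blast
qed

lemma poly_nonzero:
  assumes wf: "wf_construction d N C kind"
    and performable: "\<exists>P. (\<forall>i<N. proj_pointK d (P i)) \<and> meaningful d N C P"
    and admissible: "\<forall>k<length C. trop_admissible N C (N + k)"
  shows "\<forall>k<length C. \<forall>j\<le>d. (evalG d N C p (Xp d) ! (N + k)) j \<noteq> 0"
proof (intro allI impI)
  fix k j assume k: "k < length C" and j: "j \<le> d"
  have disjC: "\<forall>k<length C. \<forall>r<d. \<forall>r'<d. r \<noteq> r' \<longrightarrow> desc N C (C ! k ! r) \<inter> desc N C (C ! k ! r') = {}"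
    using tree_disjoint[OF wf] admissible children_distinct[OF wf performable] by blast
  obtain A where "good d N C p (N + k) A" using deg_claim[OF wf disjC, of "N + k" p] k by auto
  then have "lead_coeff ((evalG d N C p (Xp d) ! (N + k)) j) = 1 \<or> lead_coeff ((evalG d N C p (Xp d) ! (N + k)) j) = -1"
    using j unfolding good_def by blast
  then show "(evalG d N C p (Xp d) ! (N + k)) j \<noteq> 0" by auto
qed

lemma generic:
  assumes wf: "wf_construction d N C kind"
    and performable: "\<exists>P. (\<forall>i<N. proj_pointK d (P i)) \<and> meaningful d N C P"
    and admissible: "\<forall>k<length C. trop_admissible N C (N + k)"
  shows "\<exists>x\<in>torus_tuples d N. \<forall>k<length C. \<forall>j\<le>d. (evalG d N C p (\<lambda>i. torus_hom (x i)) ! (N + k)) j \<noteq> 0"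
proof -
  note nz = poly_nonzero[OF wf performable admissible, of p]
  define Q where "Q = (\<lambda>(k, j). (evalG d N C p (Xp d) ! (N + k)) j) ` ({..<length C} \<times> {..d})"
  have finQ: "finite Q" unfolding Q_def by auto
  have Qnz: "\<forall>q\<in>Q. q \<noteq> 0" unfolding Q_def using nz by auto
  have "finite (insert 0 (\<Union>q\<in>Q. {z. poly q z = 0}))"
    using finQ Qnz poly_roots_finite by auto
  then obtain M :: complex where M: "M \<notin> insert 0 (\<Union>q\<in>Q. {z. poly q z = 0})"
    using ex_new_if_finite[OF infinite_UNIV_char_0] by blast
  define x where "x = (\<lambda>i j. if i < N \<and> j < d then M ^ (Suc j * Suc d ^ i) else 0)"
  have xt: "x \<in> torus_tuples d N" unfolding torus_tuples_def x_def using M by auto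
  have th: "\<forall>i<N. torus_hom (x i) = (\<lambda>j. poly (Xp d i j) M)"
  proof (intro allI impI ext)
    fix i j assume i: "i < N"
    show "torus_hom (x i) j = poly (Xp d i j) M"
      using i by (cases j) (auto simp: torus_hom_def x_def Xp_def poly_monom)
  qed
  have eq: "evalG d N C p (\<lambda>i. torus_hom (x i)) = evalG d N C p (\<lambda>i j. poly (Xp d i j) M)"
    by (rule evalG_cong) (use th in auto)
  show ?thesis
  proof (rule bexI[OF _ xt], intro allI impI)
    fix k j assume k: "k < length C" and j: "j \<le> d"
    have "(evalG d N C p (Xp d) ! (N + k)) j \<in> Q" unfolding Q_def using k j by force
    then have "poly ((evalG d N C p (Xp d) ! (N + k)) j) M \<noteq> 0" using M by auto
    then show "(evalG d N C p (\<lambda>i. torus_hom (x i)) ! (N + k)) j \<noteq> 0"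
      unfolding eq using evalG_poly[OF wf, of "N + k" p "Xp d" M] k by simp
  qed
qed

lemma torus_hom_nz: "x \<in> torus_tuples d N \<Longrightarrow> i < N \<Longrightarrow> j \<le> d \<Longrightarrow> torus_hom (x i) j \<noteq> 0"
  unfolding torus_tuples_def torus_hom_def by auto

theorem theorem2p12:
  fixes d N :: nat and C :: "nat list list" and kind :: "nat \<Rightarrow> bool"
    and p :: "nat \<Rightarrow> nat \<Rightarrow> real"
  assumes wf: "wf_construction d N C kind"
    and performable: "\<exists>P. (\<forall>i<N. proj_pointK d (P i)) \<and> meaningful d N C P"
    and admissible: "\<forall>k<length C. trop_admissible N C (N + k)"
  shows "\<exists>U. U \<noteq> {} \<and> U \<subseteq> torus_tuples d N \<and>
           (\<forall>x\<in>U. \<exists>P. is_lift d N P p \<and> has_Pc d N P x \<and> meaningful d N C P) \<and>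
           (\<forall>P x. is_lift d N P p \<and> x \<in> U \<and> has_Pc d N P x \<longrightarrow>
              meaningful d N C P \<and>
              (\<forall>k<length C.
                 (\<forall>j\<le>d. (evalK d N C P ! (N + k)) j \<noteq> szero) \<and>
                 trop_proj_eq d (\<lambda>j. trop ((evalK d N C P ! (N + k)) j))
                               (evalT d N C p ! (N + k))))"
proof -
  define U where "U = {x \<in> torus_tuples d N. \<forall>k<length C. \<forall>j\<le>d. (evalG d N C p (\<lambda>i. torus_hom (x i)) ! (N + k)) j \<noteq> 0}"
  have part2: "meaningful d N C P \<and>
              (\<forall>k<length C.
                 (\<forall>j\<le>d. (evalK d N C P ! (N + k)) j \<noteq> szero) \<and>
                 trop_proj_eq d (\<lambda>j. trop ((evalK d N C P ! (N + k)) j))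
                               (evalT d N C p ! (N + k)))"
    if L: "is_lift d N P p" and xU: "x \<in> U" and H: "has_Pc d N P x" for P x
  proof -
    have each: "(\<forall>j\<le>d. (evalK d N C P ! (N + k)) j \<noteq> szero) \<and>
                 trop_proj_eq d (\<lambda>j. trop ((evalK d N C P ! (N + k)) j)) (evalT d N C p ! (N + k))"
      if k: "k < length C" for k
    proof -
      obtain h lam where hl: "lam \<noteq> 0" "\<forall>j\<le>d. is_puiseux ((evalK d N C P ! (N + k)) j) \<and>
           lo ((evalK d N C P ! (N + k)) j) (- (evalT d N C p ! (N + k)) j - h)
              (lam * (evalG d N C p (\<lambda>i. torus_hom (x i)) ! (N + k)) j)"
        using main_inv[OF wf L H, of "N + k"] k by auto
      have nz: "lam * (evalG d N C p (\<lambda>i. torus_hom (x i)) ! (N + k)) j \<noteq> 0" if "j \<le> d" for j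
        using hl(1) xU k that unfolding U_def by auto
      show ?thesis
      proof
        show "\<forall>j\<le>d. (evalK d N C P ! (N + k)) j \<noteq> szero" using lo_trop(1) hl(2) nz by blast
        show "trop_proj_eq d (\<lambda>j. trop ((evalK d N C P ! (N + k)) j)) (evalT d N C p ! (N + k))"
          unfolding trop_proj_eq_def
        proof (rule exI[of _ h], intro allI impI)
          fix j assume j: "j \<le> d"
          have "trop ((evalK d N C P ! (N + k)) j) = - (- (evalT d N C p ! (N + k)) j - h)"
            using lo_trop(3)[of "(evalK d N C P ! (N + k)) j"] hl(2) nz[OF j] j by blast
          then show "trop ((evalK d N C P ! (N + k)) j) = (evalT d N C p ! (N + k)) j + h" by simp
        qed
      qed
    qed
    then show ?thesis unfolding meaningful_def by blast
  qed
  have part1: "\<exists>P. is_lift d N P p \<and> has_Pc d N P x \<and> meaningful d N C P" if xU: "x \<in> U" for x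
  proof -
    have xt: "x \<in> torus_tuples d N" using xU unfolding U_def by auto
    define P0 where "P0 = (\<lambda>i j a. if a = - p i j then torus_hom (x i) j else 0)"
    have lo0: "lo (P0 i j) (- p i j) (torus_hom (x i) j)" for i j
      unfolding lo_def P0_def by auto
    have pu0: "is_puiseux (P0 i j)" for i j
      unfolding is_puiseux_def P0_def by (auto intro: finite_subset[of _ "{- p i j}"])
    have L: "is_lift d N P0 p"
      unfolding is_lift_def proj_pointK_def trop_proj_eq_def
    proof (intro allI impI)
      fix i assume i: "i < N"
      have a: "\<forall>j\<le>d. is_puiseux (P0 i j)" using pu0 by auto
      have b: "\<forall>j\<le>d. P0 i j \<noteq> szero"
      proof (intro allI impI)
        fix j assume "j \<le> d"
        then show "P0 i j \<noteq> szero" by (rule lo_trop(1)[OF lo0 torus_hom_nz[OF xt i]])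
      qed
      have c: "\<exists>c. \<forall>j\<le>d. trop (P0 i j) = p i j + c"
      proof (rule exI[of _ 0], intro allI impI)
        fix j assume "j \<le> d"
        then have "trop (P0 i j) = - (- p i j)" by (rule lo_trop(3)[OF lo0 torus_hom_nz[OF xt i]])
        then show "trop (P0 i j) = p i j + 0" by simp
      qed
      show "((\<forall>j\<le>d. is_puiseux (P0 i j)) \<and> (\<exists>j\<le>d. P0 i j \<noteq> szero)) \<and>
          (\<forall>j\<le>d. P0 i j \<noteq> szero) \<and> (\<exists>c. \<forall>j\<le>d. trop (P0 i j) = p i j + c)"
        using a b c by blast
    qed
    have H: "has_Pc d N P0 x"
      unfolding has_Pc_def cproj_eq_def
    proof (intro allI impI)
      fix i assume i: "i < N"
      have "\<forall>j\<le>d. Pc (P0 i j) = 1 * torus_hom (x i) j"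
      proof (intro allI impI)
        fix j assume "j \<le> d"
        then have "Pc (P0 i j) = torus_hom (x i) j" by (rule lo_trop(4)[OF lo0 torus_hom_nz[OF xt i]])
        then show "Pc (P0 i j) = 1 * torus_hom (x i) j" by simp
      qed
      then show "\<exists>s. s \<noteq> 0 \<and> (\<forall>j\<le>d. Pc (P0 i j) = s * torus_hom (x i) j)"
        by (intro exI[of _ "1::complex"] conjI) simp_all
    qed
    have "meaningful d N C P0" using part2[OF L xU H] by (rule conjunct1)
    then show ?thesis using L H by blast
  qed
  obtain x0 where "x0 \<in> torus_tuples d N" "\<forall>k<length C. \<forall>j\<le>d. (evalG d N C p (\<lambda>i. torus_hom (x0 i)) ! (N + k)) j \<noteq> 0"
    using generic[OF wf performable admissible, of p] by blast
  then have "x0 \<in> U" unfolding U_def by blast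
  then have f1: "U \<noteq> {}" by blast
  have f2: "U \<subseteq> torus_tuples d N" unfolding U_def by blast
  have f3: "\<forall>x\<in>U. \<exists>P. is_lift d N P p \<and> has_Pc d N P x \<and> meaningful d N C P"
    using part1 by blast
  have f4: "\<forall>P x. is_lift d N P p \<and> x \<in> U \<and> has_Pc d N P x \<longrightarrow>
              meaningful d N C P \<and>
              (\<forall>k<length C.
                 (\<forall>j\<le>d. (evalK d N C P ! (N + k)) j \<noteq> szero) \<and>
                 trop_proj_eq d (\<lambda>j. trop ((evalK d N C P ! (N + k)) j))
                               (evalT d N C p ! (N + k)))"
    using part2 by blast
  show ?thesis by (rule exI[of _ U], intro conjI) (fact f1 f2 f3 f4)+
qed

end
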